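(* Let $G$ be a disconnected graph which has only finitely many non-trivial connected components, and such that for each connected component $H$ of $G$, every connected graph equimorphic to $H$ is isomorphic to $H$. Then either $G$ has infinitely many pairwise non-isomorphic disconnected siblings, or every sibling of $G$ is isomorphic to $G$.
   Context: Graphs are undirected and loopless. $G$ embeds into $G'$ if $G$ is isomorphic to an induced subgraph of $G'$; $G,G'$ are equimorphic if each embeds into the other; a sibling of $G$ is a graph equimorphic to $G$. A connected component is trivial if it consists of a single vertex. *)

theory Defs
  imports Main
begin

type_synonym 'a graph = "'a set \<times> ('a \<Rightarrow> 'a \<Rightarrow> bool)"

definition verts :: "'a graph \<Rightarrow> 'a set" where
  "verts G = fst G"

definition adj :: "'a graph \<Rightarrow> 'a \<Rightarrow> 'a \<Rightarrow> bool" where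
  "adj G = snd G"

definition graph :: "'a graph \<Rightarrow> bool" where
  "graph G \<longleftrightarrow> (\<forall>x y. adj G x y \<longrightarrow> x \<in> verts G \<and> y \<in> verts G \<and> x \<noteq> y \<and> adj G y x)"

definition iso :: "'a graph \<Rightarrow> 'b graph \<Rightarrow> bool" where
  "iso G H \<longleftrightarrow> (\<exists>f. bij_betw f (verts G) (verts H) \<and>
     (\<forall>x\<in>verts G. \<forall>y\<in>verts G. adj G x y \<longleftrightarrow> adj H (f x) (f y)))"

definition embeds :: "'a graph \<Rightarrow> 'b graph \<Rightarrow> bool" where
  "embeds G H \<longleftrightarrow> (\<exists>f. inj_on f (verts G) \<and> f ` verts G \<subseteq> verts H \<and>
     (\<forall>x\<in>verts G. \<forall>y\<in>verts G. adj G x y \<longleftrightarrow> adj H (f x) (f y)))"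

definition equimorphic :: "'a graph \<Rightarrow> 'b graph \<Rightarrow> bool" where
  "equimorphic G H \<longleftrightarrow> embeds G H \<and> embeds H G"

definition induced :: "'a graph \<Rightarrow> 'a set \<Rightarrow> 'a graph" where
  "induced G W = (W, \<lambda>x y. adj G x y \<and> x \<in> W \<and> y \<in> W)"

definition reach :: "'a graph \<Rightarrow> 'a \<Rightarrow> 'a \<Rightarrow> bool" where
  "reach G = (adj G)\<^sup>*\<^sup>*"

definition connected_graph :: "'a graph \<Rightarrow> bool" where
  "connected_graph G \<longleftrightarrow> verts G \<noteq> {} \<and> (\<forall>x\<in>verts G. \<forall>y\<in>verts G. reach G x y)"

definition disconnected :: "'a graph \<Rightarrow> bool" where
  "disconnected G \<longleftrightarrow> verts G \<noteq> {} \<and> \<not> connected_graph G"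

definition component_verts :: "'a graph \<Rightarrow> 'a \<Rightarrow> 'a set" where
  "component_verts G x = {y \<in> verts G. reach G x y}"

definition components :: "'a graph \<Rightarrow> 'a graph set" where
  "components G = {induced G (component_verts G x) | x. x \<in> verts G}"

definition trivial_component :: "'a graph \<Rightarrow> bool" where
  "trivial_component H \<longleftrightarrow> (\<exists>v. verts H = {v})"

definition sibling :: "'a graph \<Rightarrow> 'a graph \<Rightarrow> bool" where
  "sibling G' G \<longleftrightarrow> graph G' \<and> equimorphic G' G"

end

theory Submission
  imports Defs
begin


definition emb :: "('a \<Rightarrow> 'b) \<Rightarrow> 'a graph \<Rightarrow> 'b graph \<Rightarrow> bool" where
  "emb f G H \<longleftrightarrow> inj_on f (verts G) \<and> f ` verts G \<subseteq> verts H \<and>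
     (\<forall>x\<in>verts G. \<forall>y\<in>verts G. adj G x y \<longleftrightarrow> adj H (f x) (f y))"

definition NI :: "'a graph \<Rightarrow> 'a set" where
  "NI G = {x. \<exists>y. adj G x y}"

definition isol :: "'a graph \<Rightarrow> 'a set" where
  "isol G = verts G - NI G"

abbreviation comp :: "'a graph \<Rightarrow> 'a \<Rightarrow> 'a set" where
  "comp \<equiv> component_verts"

lemma embeds_emb: "embeds G H \<longleftrightarrow> (\<exists>f. emb f G H)"
  unfolding embeds_def emb_def by blast

lemma verts_induced[simp]: "verts (induced G W) = W"
  by (simp add: induced_def verts_def)

lemma adj_induced[simp]: "adj (induced G W) x y \<longleftrightarrow> adj G x y \<and> x \<in> W \<and> y \<in> W"
  by (simp add: induced_def adj_def)

lemma graph_induced: "graph G \<Longrightarrow> graph (induced G W)"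
  unfolding graph_def by auto

lemma graphD: "graph G \<Longrightarrow> adj G x y \<Longrightarrow> x \<in> verts G \<and> y \<in> verts G \<and> x \<noteq> y \<and> adj G y x"
  unfolding graph_def by blast

lemma reach_refl[simp]: "reach G x x"
  by (simp add: reach_def)

lemma reach_adj: "adj G x y \<Longrightarrow> reach G x y"
  by (simp add: reach_def)

lemma reach_trans: "reach G x y \<Longrightarrow> reach G y z \<Longrightarrow> reach G x z"
  unfolding reach_def by (meson rtranclp_trans)

lemma reach_step: "reach G x y \<Longrightarrow> adj G y z \<Longrightarrow> reach G x z"
  unfolding reach_def by (meson rtranclp.rtrancl_into_rtrancl)

lemma reach_sym: assumes "graph G" "reach G x y" shows "reach G y x"
  using assms(2) unfolding reach_def
proof (induction rule: rtranclp_induct)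
  case base then show ?case by simp
next
  case (step y z)
  have "adj G z y" using graphD[OF assms(1) step(2)] by blast
  then show ?case using step(3) by (meson converse_rtranclp_into_rtranclp)
qed

lemma reach_cases: "reach G x y \<Longrightarrow> x = y \<or> (\<exists>z. adj G x z)"
  unfolding reach_def by (induction rule: converse_rtranclp_induct) auto

lemma reach_closed:
  assumes "reach H x y" "x \<in> Y" "\<And>a b. a \<in> Y \<Longrightarrow> adj H a b \<Longrightarrow> b \<in> Y"
  shows "y \<in> Y"
  using assms(1,2) unfolding reach_def
  by (induction rule: rtranclp_induct) (auto intro: assms(3))

lemma reach_isol: "x \<notin> NI G \<Longrightarrow> reach G x y \<Longrightarrow> y = x"
  using reach_closed[of G x y "{x}"] by (auto simp: NI_def)

lemma reach_in: assumes "graph G" "reach G x y" "x \<in> verts G" shows "y \<in> verts G"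
  using reach_closed[OF assms(2,3)] graphD[OF assms(1)] by blast

lemma emb_reach:
  assumes "graph G" "emb f G H" "reach G x y"
  shows "reach H (f x) (f y)"
  using assms(3) unfolding reach_def
proof (induction rule: rtranclp_induct)
  case base then show ?case by simp
next
  case (step y z)
  have "adj H (f y) (f z)" using graphD[OF assms(1) step(2)] assms(2) step(2)
    unfolding emb_def by blast
  then show ?case using step(3) by (meson rtranclp.rtrancl_into_rtrancl)
qed

lemma reach_induced_closed:
  assumes "reach G x y" "x \<in> W" "\<And>a b. a \<in> W \<Longrightarrow> adj G a b \<Longrightarrow> b \<in> W"
  shows "reach (induced G W) x y"
  using assms(1,2) unfolding reach_def
proof (induction rule: rtranclp_induct)
  case base then show ?case by simp
next
  case (step y z)
  have "y \<in> W" using reach_closed[of G x y W] step assms(3) unfolding reach_def by blast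
  then have "z \<in> W" using assms(3) step(2) by blast
  then have "adj (induced G W) y z" using step(2) \<open>y \<in> W\<close> by simp
  then show ?case using step by (meson rtranclp.rtrancl_into_rtrancl)
qed

lemma reach_induced_mono:
  assumes "reach (induced G W) x y" "W \<subseteq> W'"
  shows "reach (induced G W') x y"
  using assms(1) unfolding reach_def
  by (induction rule: rtranclp_induct) (use assms(2) in \<open>auto intro: rtranclp.rtrancl_into_rtrancl\<close>)

lemma reach_induced_sub: "reach (induced G W) x y \<Longrightarrow> reach G x y"
  unfolding reach_def
  by (induction rule: rtranclp_induct) (auto intro: rtranclp.rtrancl_into_rtrancl)

lemma emb_NI: assumes "graph G" "emb f G H" "x \<in> NI G" shows "f x \<in> NI H"
proof -
  obtain y where "adj G x y" using assms(3) by (auto simp: NI_def)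
  moreover have "x \<in> verts G" "y \<in> verts G" using graphD[OF assms(1) \<open>adj G x y\<close>] by auto
  ultimately have "adj H (f x) (f y)" using assms(2) unfolding emb_def by blast
  then show ?thesis by (auto simp: NI_def)
qed

lemma NI_verts: "graph G \<Longrightarrow> NI G \<subseteq> verts G"
  unfolding NI_def using graphD by fastforce

lemma emb_comp: "emb f G H \<Longrightarrow> emb g H K \<Longrightarrow> emb (g \<circ> f) G K"
proof -
  assume f: "emb f G H" and g: "emb g H K"
  have "inj_on (g \<circ> f) (verts G)" using f g unfolding emb_def
    by (meson comp_inj_on inj_on_subset)
  moreover have "(g \<circ> f) ` verts G \<subseteq> verts K" using f g unfolding emb_def by (auto simp: image_subset_iff)
  moreover have "\<forall>x\<in>verts G. \<forall>y\<in>verts G. adj G x y \<longleftrightarrow> adj K ((g \<circ> f) x) ((g \<circ> f) y)"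
    using f g unfolding emb_def by (simp add: image_subset_iff)
  ultimately show ?thesis unfolding emb_def by blast
qed

lemma emb_id: "emb id G G"
  unfolding emb_def by auto

lemma emb_pow: "emb e G G \<Longrightarrow> emb (e ^^ n) G G"
proof (induction n)
  case 0 then show ?case using emb_id[of G] by (simp add: id_def)
next
  case (Suc n) then show ?case using emb_comp[of "e^^n" G G e G] by (simp add: comp_def)
qed

lemma emb_induced:
  assumes "emb f G H" "C \<subseteq> verts G" "f ` C \<subseteq> D"
  shows "emb f (induced G C) (induced H D)"
  using assms unfolding emb_def by (auto simp: inj_on_def subset_iff)

lemma emb_into_induced:
  assumes "emb f G H" "f ` verts G \<subseteq> W"
  shows "emb f G (induced H W)"
  using assms unfolding emb_def by auto

lemma emb_incl: "W \<subseteq> verts G \<Longrightarrow> emb id (induced G W) G"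
  unfolding emb_def by auto

lemma embeds_trans: "embeds G H \<Longrightarrow> embeds H K \<Longrightarrow> embeds G K"
  unfolding embeds_emb using emb_comp by blast

lemma iso_emb: "iso G H \<longleftrightarrow> (\<exists>f. emb f G H \<and> f ` verts G = verts H)"
  unfolding iso_def emb_def bij_betw_def by auto

lemma iso_refl: "iso G G"
  unfolding iso_def by (rule exI[of _ id]) auto

lemma iso_sym: assumes "iso G H" shows "iso H G"
proof -
  obtain f where f: "bij_betw f (verts G) (verts H)"
     "\<forall>x\<in>verts G. \<forall>y\<in>verts G. adj G x y \<longleftrightarrow> adj H (f x) (f y)"
    using assms unfolding iso_def by blast
  let ?g = "inv_into (verts G) f"
  have "bij_betw ?g (verts H) (verts G)" using f(1) by (rule bij_betw_inv_into)
  moreover have "\<forall>x\<in>verts H. \<forall>y\<in>verts H. adj H x y \<longleftrightarrow> adj G (?g x) (?g y)"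
  proof (intro ballI)
    fix x y assume "x \<in> verts H" "y \<in> verts H"
    then have "?g x \<in> verts G" "?g y \<in> verts G" "f (?g x) = x" "f (?g y) = y"
      using f(1) by (auto simp: bij_betw_def inv_into_into f_inv_into_f)
    then show "adj H x y \<longleftrightarrow> adj G (?g x) (?g y)" using f(2) by metis
  qed
  ultimately show ?thesis unfolding iso_def by blast
qed

lemma comp_self: "x \<in> verts G \<Longrightarrow> x \<in> comp G x"
  by (simp add: component_verts_def)

lemma comp_eq: assumes "graph G" "reach G a b" shows "comp G a = comp G b"
proof -
  have ba: "reach G b a" using reach_sym[OF assms] .
  have "reach G a y = reach G b y" for y
  proof
    assume "reach G a y" then show "reach G b y" using reach_trans[OF ba] by simp
  next
    assume "reach G b y" then show "reach G a y" using reach_trans[OF assms(2)] by simp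
  qed
  then show ?thesis unfolding component_verts_def by simp
qed

lemma comp_sub: "comp G x \<subseteq> verts G"
  by (auto simp: component_verts_def)

lemma comp_closed: assumes "graph G" "a \<in> comp G x" "adj G a b" shows "b \<in> comp G x"
proof -
  have "reach G x a" "a \<in> verts G" using assms(2) by (auto simp: component_verts_def)
  then have "reach G x b" using reach_step assms(3) by metis
  then show ?thesis using graphD[OF assms(1,3)] by (auto simp: component_verts_def)
qed

lemma comp_mem_eq: assumes "graph G" "y \<in> comp G x" shows "comp G y = comp G x"
  using comp_eq[OF assms(1), of x y] assms(2) by (auto simp: component_verts_def)



definition Pk :: "bool \<Rightarrow> nat \<Rightarrow> 'a graph \<Rightarrow> bool" where
  "Pk b k H \<longleftrightarrow> (\<exists>X. X \<subseteq> verts H \<and> finite X \<and> card X = k \<and>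
     (\<forall>x\<in>X. \<forall>y\<in>X. x \<noteq> y \<longrightarrow> \<not> reach H x y) \<and> (b \<longrightarrow> X \<subseteq> NI H))"

lemma Pk_mono: assumes "Pk b k H" "j \<le> k" shows "Pk b j H"
proof -
  obtain X where X: "X \<subseteq> verts H" "finite X" "card X = k"
     "\<forall>x\<in>X. \<forall>y\<in>X. x \<noteq> y \<longrightarrow> \<not> reach H x y" "b \<longrightarrow> X \<subseteq> NI H"
    using assms(1) unfolding Pk_def by blast
  obtain T where T: "T \<subseteq> X" "card T = j" "finite T"
    using obtain_subset_with_card_n[of j X] assms(2) X(3) by metis
  show ?thesis unfolding Pk_def
    by (rule exI[of _ T]) (use T X in blast)
qed

lemma iso_inv_emb:
  assumes "emb f G H" "f ` verts G = verts H"
  shows "emb (inv_into (verts G) f) H G"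
proof -
  let ?g = "inv_into (verts G) f"
  have bij: "bij_betw f (verts G) (verts H)" using assms unfolding emb_def bij_betw_def by blast
  have "bij_betw ?g (verts H) (verts G)" using bij by (rule bij_betw_inv_into)
  moreover have "\<forall>x\<in>verts H. \<forall>y\<in>verts H. adj H x y \<longleftrightarrow> adj G (?g x) (?g y)"
  proof (intro ballI)
    fix x y assume "x \<in> verts H" "y \<in> verts H"
    then have "?g x \<in> verts G" "?g y \<in> verts G" "f (?g x) = x" "f (?g y) = y"
      using bij by (auto simp: bij_betw_def inv_into_into f_inv_into_f)
    then show "adj H x y \<longleftrightarrow> adj G (?g x) (?g y)" using assms(1) unfolding emb_def by metis
  qed
  ultimately show ?thesis unfolding emb_def bij_betw_def by blast
qed

lemma Pk_iso:
  assumes "graph H1" "graph H2" "iso H1 H2" "Pk b k H1"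
  shows "Pk b k H2"
proof -
  obtain f where f: "emb f H1 H2" "f ` verts H1 = verts H2" using iso_emb[THEN iffD1, OF assms(3)] by blast
  let ?g = "inv_into (verts H1) f"
  have g: "emb ?g H2 H1" using iso_inv_emb[OF f] .
  obtain X where X: "X \<subseteq> verts H1" "finite X" "card X = k"
     "\<forall>x\<in>X. \<forall>y\<in>X. x \<noteq> y \<longrightarrow> \<not> reach H1 x y" "b \<longrightarrow> X \<subseteq> NI H1"
    using assms(4) unfolding Pk_def by blast
  have injV: "inj_on f (verts H1)" using f(1) unfolding emb_def by blast
  have inj: "inj_on f X" using inj_on_subset[OF injV X(1)] .
  have gf: "?g (f x) = x" if "x \<in> X" for x
    using inv_into_f_f[OF injV] X(1) that by blast
  have "f ` X \<subseteq> verts H2" using X(1) f(2) by blast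
  moreover have "finite (f ` X)" using X(2) by simp
  moreover have "card (f ` X) = k" using card_image[OF inj] X(3) by simp
  moreover have "\<forall>x\<in>f ` X. \<forall>y\<in>f ` X. x \<noteq> y \<longrightarrow> \<not> reach H2 x y"
  proof (intro ballI impI)
    fix x' y' assume "x' \<in> f ` X" "y' \<in> f ` X" "x' \<noteq> y'"
    then obtain x y where xy: "x \<in> X" "y \<in> X" "x' = f x" "y' = f y" by blast
    then have "x \<noteq> y" using \<open>x' \<noteq> y'\<close> by blast
    show "\<not> reach H2 x' y'"
    proof
      assume "reach H2 x' y'"
      then have "reach H1 (?g x') (?g y')" using emb_reach[OF assms(2) g] by simp
      then have "reach H1 x y" using gf xy by simp
      then show False using X(4) xy \<open>x \<noteq> y\<close> by blast
    qed
  qed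
  moreover have "b \<longrightarrow> f ` X \<subseteq> NI H2"
  proof
    assume "b"
    then have "X \<subseteq> NI H1" using X(5) by simp
    then show "f ` X \<subseteq> NI H2" using emb_NI[OF assms(1) f(1)] by auto
  qed
  ultimately show ?thesis unfolding Pk_def by (intro exI[of _ "f ` X"]) simp
qed

lemma pigeon:
  assumes "graph H" "\<forall>x\<in>X. \<forall>y\<in>X. x \<noteq> y \<longrightarrow> \<not> reach H x y" "finite R"
    "\<forall>x\<in>X. \<exists>r\<in>R. reach H x r"
  shows "card X \<le> card R"
proof -
  define \<rho> where "\<rho> x = (SOME r. r \<in> R \<and> reach H x r)" for x
  have \<rho>: "\<rho> x \<in> R \<and> reach H x (\<rho> x)" if "x \<in> X" for x
    unfolding \<rho>_def using assms(4) that by (metis (mono_tags, lifting) someI_ex)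
  have "inj_on \<rho> X"
  proof (rule inj_onI)
    fix x y assume "x \<in> X" "y \<in> X" "\<rho> x = \<rho> y"
    then have "reach H x (\<rho> x)" "reach H (\<rho> x) y" using \<rho> reach_sym[OF assms(1)] by metis+
    then have "reach H x y" using reach_trans by metis
    then show "x = y" using assms(2) \<open>x \<in> X\<close> \<open>y \<in> X\<close> by blast
  qed
  then show ?thesis using card_inj_on_le[of \<rho> X R] \<rho> assms(3) by blast
qed



locale tmpl =
  fixes G :: "'a graph" and e :: "'a \<Rightarrow> 'a" and Z :: "'a set" and z0 :: 'a
    and b :: bool and R :: "'a set"
  assumes gr: "graph G" and em: "emb e G G" and Zs: "Z \<subseteq> verts G" and Zf: "finite Z"
    and z0: "z0 \<in> Z" and Zd: "Z \<inter> e ` verts G = {}"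
    and Zn: "\<forall>z\<in>Z. \<forall>w\<in>e ` verts G. \<not> adj G z w"
    and Zr: "\<forall>z\<in>Z. reach (induced G Z) z0 z"
    and Zb: "b \<longrightarrow> z0 \<in> NI (induced G Z)"
    and Rf: "finite R" and Rr: "\<forall>y\<in>verts G. (b \<longrightarrow> y \<in> NI G) \<longrightarrow> (\<exists>r\<in>R. reach G y r)"
begin

definition W :: "nat \<Rightarrow> 'a set" where
  "W m = (e^^m) ` verts G \<union> (\<Union>j<m. (e^^j) ` Z)"

lemma pow_emb: "emb (e^^n) G G"
  using emb_pow[OF em] .

lemma pow_sub: "(e^^n) ` verts G \<subseteq> verts G"
  using pow_emb unfolding emb_def by blast

lemma pow_inj: "inj_on (e^^n) (verts G)"
  using pow_emb unfolding emb_def by blast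

lemma pow_adj: "x \<in> verts G \<Longrightarrow> y \<in> verts G \<Longrightarrow> adj G ((e^^n) x) ((e^^n) y) \<longleftrightarrow> adj G x y"
  using pow_emb unfolding emb_def by blast

lemma pow_mono: assumes "j \<le> k" shows "(e^^k) ` verts G \<subseteq> (e^^j) ` verts G"
proof -
  have k: "k = j + (k - j)" using assms by simp
  have "(e^^k) ` verts G = (e^^j) ` ((e^^(k-j)) ` verts G)"
    by (subst k, simp only: funpow_add image_comp)
  also have "\<dots> \<subseteq> (e^^j) ` verts G" using pow_sub by (rule image_mono)
  finally show ?thesis .
qed

lemma K2:
  assumes "z \<in> Z" "w \<in> (e^^Suc j) ` verts G"
  shows "\<not> adj G ((e^^j) z) w \<and> (e^^j) z \<noteq> w"
proof -
  obtain y where y: "y \<in> verts G" "w = (e^^Suc j) y" using assms(2) by blast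
  have w: "w = (e^^j) (e y)" using y(2) by (metis comp_apply funpow_Suc_right)
  have ey: "e y \<in> verts G" using em y(1) unfolding emb_def by blast
  have zV: "z \<in> verts G" using Zs assms(1) by blast
  have "\<not> adj G z (e y)" using Zn assms(1) y(1) by blast
  then have "\<not> adj G ((e^^j) z) w" using pow_adj[OF zV ey] w by simp
  moreover have "z \<noteq> e y" using Zd assms(1) y(1) by blast
  then have "(e^^j) z \<noteq> w" using pow_inj[of j] zV ey w unfolding inj_on_def by metis
  ultimately show ?thesis by blast
qed

lemma W_sub: "W m \<subseteq> verts G"
  unfolding W_def using pow_sub Zs by blast

lemma Y_sub: "j < m \<Longrightarrow> (e^^j) ` Z \<subseteq> W m"
  unfolding W_def by blast

lemma Z_pow_sub: "(e^^j) ` Z \<subseteq> (e^^j) ` verts G"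
  using Zs by (rule image_mono)

lemma closed:
  assumes "j < m" "a \<in> (e^^j) ` Z" "adj G a c" "c \<in> W m"
  shows "c \<in> (e^^j) ` Z"
proof -
  obtain z where z: "z \<in> Z" "a = (e^^j) z" using assms(2) by blast
  consider (A) "c \<in> (e^^m) ` verts G" | (B) i where "i < m" "c \<in> (e^^i) ` Z"
    using assms(4) unfolding W_def by blast
  then show ?thesis
  proof cases
    case A
    then have "c \<in> (e^^Suc j) ` verts G" using pow_mono[OF Suc_leI[OF assms(1)]] by blast
    then show ?thesis using K2[OF z(1)] z(2) assms(3) by blast
  next
    case B
    show ?thesis
    proof (cases "i = j")
      case True then show ?thesis using B by simp
    next
      case False
      show ?thesis
      proof (cases "j < i")
        case True
        then have "c \<in> (e^^Suc j) ` verts G"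
          using pow_mono[OF Suc_leI[OF True]] B(2) Z_pow_sub[of i] by blast
        then show ?thesis using K2[OF z(1)] z(2) assms(3) by blast
      next
        case False
        then have ij: "i < j" using \<open>i \<noteq> j\<close> by simp
        obtain z' where z': "z' \<in> Z" "c = (e^^i) z'" using B(2) by blast
        have "a \<in> (e^^Suc i) ` verts G"
          using pow_mono[OF Suc_leI[OF ij]] assms(2) Z_pow_sub[of j] by blast
        moreover have "adj G c a" using graphD[OF gr assms(3)] by blast
        ultimately show ?thesis using K2[OF z'(1), of a i] z'(2) by blast
      qed
    qed
  qed
qed

lemma notin:
  assumes "j < m" "k \<le> m" "k \<noteq> j"
  shows "(e^^k) z0 \<notin> (e^^j) ` Z"
proof
  assume "(e^^k) z0 \<in> (e^^j) ` Z"
  then obtain z where z: "z \<in> Z" "(e^^k) z0 = (e^^j) z" by blast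
  have z0V: "z0 \<in> verts G" using z0 Zs by blast
  show False
  proof (cases "j < k")
    case True
    then have "(e^^k) z0 \<in> (e^^Suc j) ` verts G" using pow_mono[OF Suc_leI[OF True]] z0V by blast
    then show False using K2[OF z(1)] z(2) by metis
  next
    case False
    then have "k < j" using assms(3) by simp
    then have "(e^^j) z \<in> (e^^Suc k) ` verts G"
      using pow_mono[OF Suc_leI[OF \<open>k < j\<close>]] z(1) Zs by blast
    then show False using K2[OF z0] z(2) by metis
  qed
qed

lemma reach_stay:
  assumes "j < m" "reach (induced G (W m)) ((e^^j) z0) c"
  shows "c \<in> (e^^j) ` Z"
proof (rule reach_closed[OF assms(2)])
  show "(e^^j) z0 \<in> (e^^j) ` Z" using z0 by blast
next
  fix a c assume "a \<in> (e^^j) ` Z" "adj (induced G (W m)) a c"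
  then show "c \<in> (e^^j) ` Z" using closed[OF assms(1)] by simp
qed

lemma embW: "emb (e^^m) G (induced G (W m))"
  by (rule emb_into_induced[OF pow_emb]) (auto simp: W_def)

lemma grW: "graph (induced G (W m))"
  using graph_induced[OF gr] .

lemma Pk_lower: "Pk b m (induced G (W m))"
proof -
  let ?X = "(\<lambda>j. (e^^j) z0) ` {..<m}"
  have inj: "inj_on (\<lambda>j. (e^^j) z0) {..<m}"
  proof (rule inj_onI)
    fix j k assume "j \<in> {..<m}" "k \<in> {..<m}" "(e^^j) z0 = (e^^k) z0"
    then show "j = k" using notin[of j m k] z0 by (metis image_eqI lessThan_iff less_imp_le)
  qed
  have "?X \<subseteq> W m" using Y_sub z0 by blast
  moreover have "finite ?X" by simp
  moreover have "card ?X = m" using card_image[OF inj] by simp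
  moreover have "\<forall>x\<in>?X. \<forall>y\<in>?X. x \<noteq> y \<longrightarrow> \<not> reach (induced G (W m)) x y"
  proof (intro ballI impI)
    fix x y assume "x \<in> ?X" "y \<in> ?X" "x \<noteq> y"
    then obtain j k where jk: "j < m" "k < m" "x = (e^^j) z0" "y = (e^^k) z0" by blast
    then have "k \<noteq> j" using \<open>x \<noteq> y\<close> by blast
    show "\<not> reach (induced G (W m)) x y"
      using reach_stay[OF jk(1), of y] notin[OF jk(1) less_imp_le[OF jk(2)] \<open>k \<noteq> j\<close>] jk(3,4) by metis
  qed
  moreover have "b \<longrightarrow> ?X \<subseteq> NI (induced G (W m))"
  proof (intro impI subsetI)
    fix x assume "b" "x \<in> ?X"
    then obtain j where j: "j < m" "x = (e^^j) z0" by blast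
    obtain z' where z': "adj (induced G Z) z0 z'" using Zb \<open>b\<close> unfolding NI_def by blast
    then have "adj G z0 z'" "z' \<in> Z" by auto
    then have "adj G x ((e^^j) z')" using pow_adj[of z0 z' j] j(2) z0 Zs by blast
    moreover have "x \<in> W m" "(e^^j) z' \<in> W m" using Y_sub[OF j(1)] j(2) z0 \<open>z' \<in> Z\<close> by blast+
    ultimately show "x \<in> NI (induced G (W m))" unfolding NI_def by auto
  qed
  ultimately show ?thesis unfolding Pk_def by (intro exI[of _ ?X]) simp
qed

lemma Pk_upper: "\<not> Pk b (card R + m + 1) (induced G (W m))"
proof
  assume "Pk b (card R + m + 1) (induced G (W m))"
  then obtain X where X: "X \<subseteq> W m" "finite X" "card X = card R + m + 1"
     "\<forall>x\<in>X. \<forall>y\<in>X. x \<noteq> y \<longrightarrow> \<not> reach (induced G (W m)) x y"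
     "b \<longrightarrow> X \<subseteq> NI (induced G (W m))"
    unfolding Pk_def by auto
  let ?R = "(e^^m) ` R \<union> (\<lambda>j. (e^^j) z0) ` {..<m}"
  have fR: "finite ?R" using Rf by simp
  have cR: "card ?R \<le> card R + m"
  proof -
    have "card ?R \<le> card ((e^^m) ` R) + card ((\<lambda>j. (e^^j) z0) ` {..<m})" by (rule card_Un_le)
    also have "\<dots> \<le> card R + m"
      using card_image_le[OF Rf, of "e^^m"] card_image_le[of "{..<m}" "\<lambda>j. (e^^j) z0"] by simp
    finally show ?thesis .
  qed
  have "\<forall>x\<in>X. \<exists>r\<in>?R. reach (induced G (W m)) x r"
  proof
    fix x assume xX: "x \<in> X"
    then have "x \<in> W m" using X(1) by blast
    then consider (A) "x \<in> (e^^m) ` verts G" | (B) j where "j < m" "x \<in> (e^^j) ` Z"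
      unfolding W_def by blast
    then show "\<exists>r\<in>?R. reach (induced G (W m)) x r"
    proof cases
      case A
      then obtain y where y: "y \<in> verts G" "x = (e^^m) y" by blast
      have "b \<longrightarrow> y \<in> NI G"
      proof
        assume "b"
        then have "x \<in> NI (induced G (W m))" using X(5) xX by blast
        then obtain w where w: "adj G x w" "w \<in> W m" unfolding NI_def by auto
        have "w \<in> (e^^m) ` verts G"
        proof (rule ccontr)
          assume "w \<notin> (e^^m) ` verts G"
          then obtain j z where jz: "j < m" "z \<in> Z" "w = (e^^j) z" using w(2) unfolding W_def by blast
          have "x \<in> (e^^Suc j) ` verts G" using pow_mono[OF Suc_leI[OF jz(1)]] A by blast
          moreover have "adj G w x" using graphD[OF gr w(1)] by blast
          ultimately show False using K2[OF jz(2)] jz(3) by blast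
        qed
        then obtain y' where y': "y' \<in> verts G" "w = (e^^m) y'" by blast
        then have "adj G y y'" using pow_adj[OF y(1) y'(1)] w(1) y(2) by simp
        then show "y \<in> NI G" unfolding NI_def by blast
      qed
      then obtain r where r: "r \<in> R" "reach G y r" using Rr y(1) by blast
      have "reach (induced G (W m)) ((e^^m) y) ((e^^m) r)"
        using emb_reach[OF gr embW r(2)] .
      then show ?thesis using r(1) y(2) by blast
    next
      case B
      then obtain z where z: "z \<in> Z" "x = (e^^j) z" by blast
      have "reach (induced G Z) z0 z" using Zr z(1) by blast
      then have rz: "reach (induced G Z) z z0" using reach_sym[OF graph_induced[OF gr]] by blast
      have "emb (e^^j) (induced G Z) (induced G (W m))"
        using emb_induced[OF pow_emb Zs Y_sub[OF B(1)]] .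
      then have "reach (induced G (W m)) ((e^^j) z) ((e^^j) z0)"
        using emb_reach[OF graph_induced[OF gr] _ rz] by blast
      then show ?thesis using z(2) B(1) by blast
    qed
  qed
  then have "card X \<le> card ?R" using pigeon[OF grW X(4) fR] by blast
  then show False using cR X(3) by simp
qed

lemma disc: assumes "m \<ge> 1" shows "disconnected (induced G (W m))"
proof -
  have m: "0 < m" using assms by simp
  have z0V: "z0 \<in> verts G" using z0 Zs by blast
  have a: "z0 \<in> W m" using Y_sub[OF m] z0 by auto
  have bb: "(e^^m) z0 \<in> W m" using z0V unfolding W_def by blast
  have "\<not> reach (induced G (W m)) z0 ((e^^m) z0)"
    using reach_stay[OF m, of "(e^^m) z0"] notin[OF m, of m] m by auto
  then show ?thesis unfolding disconnected_def connected_graph_def using a bb by auto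
qed

end



definition FAM :: "'a graph \<Rightarrow> bool" where
  "FAM G \<longleftrightarrow> (\<exists>S :: 'a graph set. infinite S \<and>
            (\<forall>G' \<in> S. sibling G' G \<and> disconnected G') \<and>
            (\<forall>G1 \<in> S. \<forall>G2 \<in> S. G1 \<noteq> G2 \<longrightarrow> \<not> iso G1 G2))"

lemma family:
  assumes gr: "graph G" and c: "c \<ge> 1"
    and H: "\<forall>m\<ge>1. \<exists>W. W \<subseteq> verts G \<and> embeds G (induced G W) \<and> disconnected (induced G W)
              \<and> Pk b m (induced G W) \<and> \<not> Pk b (m + c) (induced G W)"
  shows "FAM G"
proof -
  define mm where "mm k = Suc k * c" for k
  have mm1: "mm k \<ge> 1" for k using c unfolding mm_def by simp
  define Q where "Q k W \<longleftrightarrow> W \<subseteq> verts G \<and> embeds G (induced G W) \<and> disconnected (induced G W)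
              \<and> Pk b (mm k) (induced G W) \<and> \<not> Pk b (mm k + c) (induced G W)" for k W
  define Wf where "Wf k = (SOME W. Q k W)" for k
  have Wf: "Q k (Wf k)" for k
  proof -
    have "\<exists>W. Q k W" unfolding Q_def using H[rule_format, OF mm1[of k]] .
    then show ?thesis unfolding Wf_def by (rule someI_ex)
  qed
  define Hf where "Hf k = induced G (Wf k)" for k
  have grH: "graph (Hf k)" for k unfolding Hf_def using graph_induced[OF gr] .
  have PH: "Pk b (mm k) (Hf k)" for k using Wf[of k] unfolding Q_def Hf_def by blast
  have nPH: "\<not> Pk b (mm k + c) (Hf k)" for k using Wf[of k] unfolding Q_def Hf_def by blast
  have aux: "\<not> iso (Hf l) (Hf k)" if "k < l" for k l
  proof
    assume i: "iso (Hf l) (Hf k)"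
    have P: "Pk b (mm l) (Hf k)" using Pk_iso[OF grH grH i PH] .
    have e1: "mm k + c = Suc (Suc k) * c" by (simp add: mm_def)
    have "Suc (Suc k) * c \<le> Suc l * c" by (rule mult_le_mono1) (use that in simp)
    then have "mm k + c \<le> mm l" using e1 by (simp add: mm_def)
    then have "Pk b (mm k + c) (Hf k)" using Pk_mono[OF P] by simp
    then show False using nPH by simp
  qed
  have noniso: "\<not> iso (Hf k) (Hf l)" if "k \<noteq> l" for k l
  proof (cases "k < l")
    case True
    show ?thesis
    proof
      assume "iso (Hf k) (Hf l)"
      then have "iso (Hf l) (Hf k)" by (rule iso_sym)
      then show False using aux[OF True] by simp
    qed
  next
    case False
    then have "l < k" using that by simp
    then show ?thesis using aux[of l k] by simp
  qed
  have inj: "inj Hf"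
  proof (rule injI)
    fix k l assume eq: "Hf k = Hf l"
    show "k = l"
    proof (rule ccontr)
      assume "k \<noteq> l"
      then have "\<not> iso (Hf k) (Hf l)" by (rule noniso)
      then show False using eq iso_refl[of "Hf l"] by simp
    qed
  qed
  have A: "infinite (range Hf)" using finite_imageD[of Hf UNIV] inj by auto
  have B: "\<forall>G' \<in> range Hf. sibling G' G \<and> disconnected G'"
  proof
    fix G' assume "G' \<in> range Hf"
    then obtain k where k: "G' = Hf k" by blast
    have sub: "Wf k \<subseteq> verts G" using Wf[of k] unfolding Q_def by blast
    have "embeds G' G" unfolding k Hf_def embeds_emb using emb_incl[OF sub] by blast
    moreover have "embeds G G'" unfolding k Hf_def using Wf[of k] unfolding Q_def by blast
    moreover have "disconnected G'" unfolding k Hf_def using Wf[of k] unfolding Q_def by blast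
    ultimately show "sibling G' G \<and> disconnected G'"
      unfolding sibling_def equimorphic_def using grH k by simp
  qed
  have C: "\<forall>G1 \<in> range Hf. \<forall>G2 \<in> range Hf. G1 \<noteq> G2 \<longrightarrow> \<not> iso G1 G2"
  proof (intro ballI impI)
    fix G1 G2 assume "G1 \<in> range Hf" "G2 \<in> range Hf" "G1 \<noteq> G2"
    then obtain k l where "G1 = Hf k" "G2 = Hf l" by blast
    then show "\<not> iso G1 G2" using noniso[of k l] \<open>G1 \<noteq> G2\<close> by auto
  qed
  show ?thesis unfolding FAM_def by (rule exI[of _ "range Hf"], intro conjI A B C)
qed

definition NTc :: "'a graph \<Rightarrow> 'a set set" where
  "NTc G = {comp G x | x. x \<in> NI G}"

lemma adj_NI: assumes "graph G" "adj G p q" shows "p \<in> NI G \<and> q \<in> NI G"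
proof -
  have "adj G q p" using graphD[OF assms] by blast
  then show ?thesis using assms(2) unfolding NI_def by blast
qed

lemma comp_NI: assumes "graph G" "x \<in> NI G" shows "comp G x \<subseteq> NI G"
proof
  fix y assume "y \<in> comp G x"
  then have r: "reach G x y" by (simp add: component_verts_def)
  show "y \<in> NI G"
  proof (cases "x = y")
    case True then show ?thesis using assms(2) by simp
  next
    case False
    have "reach G y x" using reach_sym[OF assms(1) r] .
    then have "y = x \<or> (\<exists>z. adj G y z)" by (rule reach_cases)
    then show ?thesis using False unfolding NI_def by auto
  qed
qed

lemma comp_isol: assumes "x \<in> isol G" shows "comp G x = {x}"
  using assms reach_isol[of x G] unfolding isol_def component_verts_def by auto

lemma NTc_finite:
  assumes gr: "graph G" and fin: "finite {H \<in> components G. \<not> trivial_component H}"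
  shows "finite (NTc G)"
proof -
  have "NTc G \<subseteq> verts ` {H \<in> components G. \<not> trivial_component H}"
  proof
    fix C assume "C \<in> NTc G"
    then obtain x where x: "x \<in> NI G" "C = comp G x" unfolding NTc_def by blast
    obtain y where y: "adj G x y" using x(1) unfolding NI_def by blast
    have xV: "x \<in> verts G" using graphD[OF gr y] by blast
    have "x \<in> C" "y \<in> C" "x \<noteq> y" using x(2) y graphD[OF gr y] reach_adj[OF y]
      by (auto simp: component_verts_def)
    then have "\<not> trivial_component (induced G C)" unfolding trivial_component_def by auto
    moreover have "induced G C \<in> components G" unfolding components_def using x(2) xV by blast
    ultimately show "C \<in> verts ` {H \<in> components G. \<not> trivial_component H}"
      by (metis (mono_tags, lifting) image_eqI mem_Collect_eq verts_induced)
  qed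
  then show ?thesis using fin finite_subset by blast
qed

definition R0 :: "'a graph \<Rightarrow> 'a set" where
  "R0 G = (\<lambda>C. SOME r. r \<in> C) ` NTc G"

lemma R0_reach:
  assumes "graph G" "y \<in> NI G" shows "\<exists>r\<in>R0 G. reach G y r"
proof -
  have yV: "y \<in> verts G" using NI_verts[OF assms(1)] assms(2) by blast
  have C: "comp G y \<in> NTc G" using assms(2) unfolding NTc_def by blast
  have "y \<in> comp G y" using comp_self[OF yV] .
  then have "(SOME r. r \<in> comp G y) \<in> comp G y" by (rule someI)
  then have "reach G y (SOME r. r \<in> comp G y)" by (simp add: component_verts_def)
  then show ?thesis using C unfolding R0_def by blast
qed

lemma C1_FAM:
  assumes gr: "graph G" and fin: "finite (NTc G)"
    and e: "emb e G G" and uv: "adj G u v" "u \<notin> e ` verts G" "v \<notin> e ` verts G"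
    and n: "\<forall>w\<in>e ` verts G. \<not> adj G u w \<and> \<not> adj G v w"
  shows "FAM G"
proof -
  have uvV: "u \<in> verts G" "v \<in> verts G" using graphD[OF gr uv(1)] by auto
  interpret T: tmpl G e "{u,v}" u True "R0 G"
  proof
    show "graph G" by fact
    show "emb e G G" by fact
    show "{u, v} \<subseteq> verts G" using uvV by blast
    show "finite {u, v}" by simp
    show "u \<in> {u, v}" by simp
    show "{u, v} \<inter> e ` verts G = {}" using uv by blast
    show "\<forall>z\<in>{u, v}. \<forall>w\<in>e ` verts G. \<not> adj G z w" using n by blast
    have "reach (induced G {u,v}) u v" by (rule reach_adj) (simp add: uv)
    then show "\<forall>z\<in>{u, v}. reach (induced G {u, v}) u z" by auto
    show "True \<longrightarrow> u \<in> NI (induced G {u, v})" using uv(1) unfolding NI_def by auto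
    show "finite (R0 G)" using fin unfolding R0_def by simp
    show "\<forall>y\<in>verts G. (True \<longrightarrow> y \<in> NI G) \<longrightarrow> (\<exists>r\<in>R0 G. reach G y r)"
      using R0_reach[OF gr] by blast
  qed
  show ?thesis
  proof (rule family[OF gr, of "card (R0 G) + 1" True])
    show "1 \<le> card (R0 G) + 1" by simp
    show "\<forall>m\<ge>1. \<exists>W. W \<subseteq> verts G \<and> embeds G (induced G W) \<and> disconnected (induced G W) \<and>
        Pk True m (induced G W) \<and> \<not> Pk True (m + (card (R0 G) + 1)) (induced G W)"
    proof (intro allI impI)
      fix m :: nat assume "1 \<le> m"
      have embT: "embeds G (induced G (T.W m))" unfolding embeds_emb using T.embW by blast
      have "\<not> Pk True (m + (card (R0 G) + 1)) (induced G (T.W m))"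
        using T.Pk_upper[of m] by (simp add: add.commute add.left_commute)
      then show "\<exists>W. W \<subseteq> verts G \<and> embeds G (induced G W) \<and> disconnected (induced G W) \<and>
        Pk True m (induced G W) \<and> \<not> Pk True (m + (card (R0 G) + 1)) (induced G W)"
        using T.W_sub[of m] embT T.disc[OF \<open>1 \<le> m\<close>] T.Pk_lower[of m]
        by (intro exI[of _ "T.W m"]) blast
    qed
  qed
qed

lemma C2_FAM:
  assumes gr: "graph G" and fin: "finite (NTc G)" and fi: "finite (isol G)"
    and e: "emb e G G" and a: "a \<in> verts G" "a \<notin> e ` verts G"
    and n: "\<forall>w\<in>e ` verts G. \<not> adj G a w"
  shows "FAM G"
proof -
  interpret T: tmpl G e "{a}" a False "R0 G \<union> isol G"
  proof
    show "graph G" by fact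
    show "emb e G G" by fact
    show "{a} \<subseteq> verts G" using a by blast
    show "finite {a}" by simp
    show "a \<in> {a}" by simp
    show "{a} \<inter> e ` verts G = {}" using a by blast
    show "\<forall>z\<in>{a}. \<forall>w\<in>e ` verts G. \<not> adj G z w" using n by blast
    show "\<forall>z\<in>{a}. reach (induced G {a}) a z" by auto
    show "False \<longrightarrow> a \<in> NI (induced G {a})" by simp
    show "finite (R0 G \<union> isol G)" using fin fi unfolding R0_def by simp
    show "\<forall>y\<in>verts G. (False \<longrightarrow> y \<in> NI G) \<longrightarrow> (\<exists>r\<in>R0 G \<union> isol G. reach G y r)"
    proof (intro ballI impI)
      fix y assume y: "y \<in> verts G"
      show "\<exists>r\<in>R0 G \<union> isol G. reach G y r"
      proof (cases "y \<in> NI G")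
        case True then show ?thesis using R0_reach[OF gr] by blast
      next
        case False then have "y \<in> isol G" using y by (simp add: isol_def)
        then show ?thesis by (intro bexI[of _ y]) auto
      qed
    qed
  qed
  show ?thesis
  proof (rule family[OF gr, of "card (R0 G \<union> isol G) + 1" False])
    show "1 \<le> card (R0 G \<union> isol G) + 1" by simp
    show "\<forall>m\<ge>1. \<exists>W. W \<subseteq> verts G \<and> embeds G (induced G W) \<and> disconnected (induced G W) \<and>
        Pk False m (induced G W) \<and> \<not> Pk False (m + (card (R0 G \<union> isol G) + 1)) (induced G W)"
    proof (intro allI impI)
      fix m :: nat assume "1 \<le> m"
      have embT: "embeds G (induced G (T.W m))" unfolding embeds_emb using T.embW by blast
      have "\<not> Pk False (m + (card (R0 G \<union> isol G) + 1)) (induced G (T.W m))"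
        using T.Pk_upper[of m] by (simp add: add.commute add.left_commute)
      then show "\<exists>W. W \<subseteq> verts G \<and> embeds G (induced G W) \<and> disconnected (induced G W) \<and>
        Pk False m (induced G W) \<and> \<not> Pk False (m + (card (R0 G \<union> isol G) + 1)) (induced G W)"
        using T.W_sub[of m] embT T.disc[OF \<open>1 \<le> m\<close>] T.Pk_lower[of m]
        by (intro exI[of _ "T.W m"]) blast
    qed
  qed
qed



definition absw :: "'a graph \<Rightarrow> ('a \<Rightarrow> 'a) \<Rightarrow> 'a set \<Rightarrow> bool" where
  "absw G e A \<longleftrightarrow> inj_on e (NI G) \<and> e ` NI G \<subseteq> NI G \<and>
     (\<forall>x\<in>NI G. \<forall>y\<in>NI G. adj G x y \<longleftrightarrow> adj G (e x) (e y)) \<and> A \<inter> e ` NI G = {} \<and>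
     (\<forall>a\<in>A. \<forall>w\<in>e ` NI G \<union> A. \<not> adj G a w)"

definition absorb :: "'a graph \<Rightarrow> 'a set \<Rightarrow> bool" where
  "absorb G A \<longleftrightarrow> A \<subseteq> NI G \<and> (\<exists>e. absw G e A)"

lemma not_adj_isol: assumes "graph G" "x \<notin> NI G" shows "\<not> adj G x y" "\<not> adj G y x"
  using adj_NI[OF assms(1), of x y] adj_NI[OF assms(1), of y x] assms(2) by auto

lemma ext_emb:
  assumes gr: "graph G" and inj: "inj_on e (NI G)" and im: "e ` NI G \<subseteq> NI G"
    and ad: "\<forall>x\<in>NI G. \<forall>y\<in>NI G. adj G x y \<longleftrightarrow> adj G (e x) (e y)"
    and inj2: "inj_on h (verts G - NI G)" and im2: "h ` (verts G - NI G) \<subseteq> verts G"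
    and dis: "\<forall>x\<in>NI G. \<forall>y\<in>verts G - NI G. e x \<noteq> h y"
    and nad: "\<forall>x\<in>verts G. \<forall>y\<in>verts G - NI G. \<not> adj G ((\<lambda>x. if x \<in> NI G then e x else h x) x) (h y)"
  shows "emb (\<lambda>x. if x \<in> NI G then e x else h x) G G"
proof -
  let ?e = "\<lambda>x. if x \<in> NI G then e x else h x"
  have NV: "NI G \<subseteq> verts G" using NI_verts[OF gr] .
  have "inj_on ?e (verts G)"
  proof (rule inj_onI)
    fix x y assume xy: "x \<in> verts G" "y \<in> verts G" "?e x = ?e y"
    show "x = y"
    proof (cases "x \<in> NI G")
      case True
      show ?thesis
      proof (cases "y \<in> NI G")
        case True
        then show ?thesis using \<open>x \<in> NI G\<close> xy(3) inj unfolding inj_on_def by simp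
      next
        case False
        then show ?thesis using \<open>x \<in> NI G\<close> xy dis by auto
      qed
    next
      case False
      show ?thesis
      proof (cases "y \<in> NI G")
        case True
        then show ?thesis using \<open>x \<notin> NI G\<close> xy dis by (metis DiffI)
      next
        case False
        then show ?thesis using \<open>x \<notin> NI G\<close> xy inj2 unfolding inj_on_def by simp
      qed
    qed
  qed
  moreover have "?e ` verts G \<subseteq> verts G" using im im2 NV by auto
  moreover have "\<forall>x\<in>verts G. \<forall>y\<in>verts G. adj G x y \<longleftrightarrow> adj G (?e x) (?e y)"
  proof (intro ballI)
    fix x y assume xy: "x \<in> verts G" "y \<in> verts G"
    show "adj G x y \<longleftrightarrow> adj G (?e x) (?e y)"
    proof (cases "x \<in> NI G \<and> y \<in> NI G")
      case True then show ?thesis using ad by simp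
    next
      case False
      then have n1: "\<not> adj G x y" using not_adj_isol[OF gr] by blast
      have "\<not> adj G (?e x) (?e y)"
      proof (cases "y \<in> NI G")
        case True
        then have "x \<in> verts G - NI G" using False xy by blast
        then have "\<not> adj G (?e y) (h x)" using nad xy(2) by blast
        then have "\<not> adj G (h x) (?e y)" using graphD[OF gr] by blast
        then show ?thesis using \<open>x \<in> verts G - NI G\<close> by simp
      next
        case False
        then have "y \<in> verts G - NI G" using xy by blast
        then show ?thesis using nad xy(1) False by simp
      qed
      then show ?thesis using n1 by simp
    qed
  qed
  ultimately show ?thesis unfolding emb_def by blast
qed

lemma absorb_C2:
  assumes gr: "graph G" and fin: "finite (NTc G)" and fi: "finite (isol G)"
    and ab: "absorb G A" and a: "a \<in> A"
  shows "FAM G"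
proof -
  obtain e where e: "inj_on e (NI G)" "e ` NI G \<subseteq> NI G"
     "\<forall>x\<in>NI G. \<forall>y\<in>NI G. adj G x y \<longleftrightarrow> adj G (e x) (e y)" "A \<inter> e ` NI G = {}"
     "\<forall>a\<in>A. \<forall>w\<in>e ` NI G \<union> A. \<not> adj G a w"
  proof -
    obtain e where ew: "absw G e A" using ab unfolding absorb_def by blast
    note ew' = ew[unfolded absw_def]
    show ?thesis by (rule that[of e, OF ew'[THEN conjunct1] ew'[THEN conjunct2, THEN conjunct1]
      ew'[THEN conjunct2, THEN conjunct2, THEN conjunct1]
      ew'[THEN conjunct2, THEN conjunct2, THEN conjunct2, THEN conjunct1]
      ew'[THEN conjunct2, THEN conjunct2, THEN conjunct2, THEN conjunct2]])
  qed
  have AN: "A \<subseteq> NI G" using ab unfolding absorb_def by blast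
  have NV: "NI G \<subseteq> verts G" using NI_verts[OF gr] .
  let ?e = "\<lambda>x. if x \<in> NI G then e x else id x"
  have em: "emb ?e G G"
  proof (rule ext_emb[OF gr e(1,2,3)])
    show "inj_on id (verts G - NI G)" by simp
    show "id ` (verts G - NI G) \<subseteq> verts G" by auto
    show "\<forall>x\<in>NI G. \<forall>y\<in>verts G - NI G. e x \<noteq> id y" using e(2) by auto
    show "\<forall>x\<in>verts G. \<forall>y\<in>verts G - NI G. \<not> adj G (?e x) (id y)"
      using not_adj_isol(2)[OF gr] by simp
  qed
  have aV: "a \<in> verts G" using a AN NV by blast
  have aNI: "a \<in> NI G" using a AN by blast
  have "a \<notin> ?e ` verts G"
  proof
    assume "a \<in> ?e ` verts G"
    then obtain x where x: "x \<in> verts G" "a = ?e x" by blast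
    show False
    proof (cases "x \<in> NI G")
      case True then show False using x e(4) a by auto
    next
      case False then show False using x aNI by auto
    qed
  qed
  moreover have "\<forall>w\<in>?e ` verts G. \<not> adj G a w"
  proof
    fix w assume "w \<in> ?e ` verts G"
    then obtain x where x: "x \<in> verts G" "w = ?e x" by blast
    show "\<not> adj G a w"
    proof (cases "x \<in> NI G")
      case True then show ?thesis using x e(5) a by auto
    next
      case False then show ?thesis using x not_adj_isol(2)[OF gr False] by auto
    qed
  qed
  ultimately show ?thesis using C2_FAM[OF gr fin fi em aV] by blast
qed

lemma absorb_C3:
  assumes gr: "graph G" and fin: "finite (NTc G)" and fi: "infinite (isol G)"
    and ab: "absorb G A" and \<iota>: "inj_on \<iota> (isol G)" "\<iota> ` isol G \<subseteq> A"
  shows "FAM G"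
proof -
  obtain e where e: "inj_on e (NI G)" "e ` NI G \<subseteq> NI G"
     "\<forall>x\<in>NI G. \<forall>y\<in>NI G. adj G x y \<longleftrightarrow> adj G (e x) (e y)" "A \<inter> e ` NI G = {}"
     "\<forall>a\<in>A. \<forall>w\<in>e ` NI G \<union> A. \<not> adj G a w"
  proof -
    obtain e where ew: "absw G e A" using ab unfolding absorb_def by blast
    note ew' = ew[unfolded absw_def]
    show ?thesis by (rule that[of e, OF ew'[THEN conjunct1] ew'[THEN conjunct2, THEN conjunct1]
      ew'[THEN conjunct2, THEN conjunct2, THEN conjunct1]
      ew'[THEN conjunct2, THEN conjunct2, THEN conjunct2, THEN conjunct1]
      ew'[THEN conjunct2, THEN conjunct2, THEN conjunct2, THEN conjunct2]])
  qed
  have AN: "A \<subseteq> NI G" using ab unfolding absorb_def by blast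
  have NV: "NI G \<subseteq> verts G" using NI_verts[OF gr] .
  have isol_eq: "isol G = verts G - NI G" unfolding isol_def ..
  let ?e = "\<lambda>x. if x \<in> NI G then e x else \<iota> x"
  have em: "emb ?e G G"
  proof (rule ext_emb[OF gr e(1,2,3)])
    show "inj_on \<iota> (verts G - NI G)" using \<iota>(1) isol_eq by simp
    show "\<iota> ` (verts G - NI G) \<subseteq> verts G" using \<iota>(2) isol_eq AN NV by blast
    show "\<forall>x\<in>NI G. \<forall>y\<in>verts G - NI G. e x \<noteq> \<iota> y" using \<iota>(2) isol_eq e(4) by blast
    show "\<forall>x\<in>verts G. \<forall>y\<in>verts G - NI G. \<not> adj G (?e x) (\<iota> y)"
    proof (intro ballI)
      fix x y assume xy: "x \<in> verts G" "y \<in> verts G - NI G"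
      have iy: "\<iota> y \<in> A" using \<iota>(2) xy(2) isol_eq by blast
      show "\<not> adj G (?e x) (\<iota> y)"
      proof (cases "x \<in> NI G")
        case True
        then have "\<not> adj G (\<iota> y) (e x)" using e(5) iy by blast
        then show ?thesis using True graphD[OF gr, of "e x" "\<iota> y"] by auto
      next
        case False
        then have "\<iota> x \<in> A" using \<iota>(2) xy(1) isol_eq by blast
        then have "\<not> adj G (\<iota> y) (\<iota> x)" using e(5) iy by blast
        then show ?thesis using False graphD[OF gr, of "\<iota> x" "\<iota> y"] by auto
      qed
    qed
  qed
  have imN: "?e ` verts G \<subseteq> NI G" using e(2) \<iota>(2) AN isol_eq by auto
  have NIne: "NI G \<noteq> {}"
  proof -
    obtain y where "y \<in> isol G" using fi by (metis ex_in_conv finite.emptyI)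
    then show ?thesis using \<iota>(2) AN by blast
  qed
  have Ncl: "\<And>a b. a \<in> NI G \<Longrightarrow> adj G a b \<Longrightarrow> b \<in> NI G"
    using adj_NI[OF gr] by blast
  show ?thesis
  proof (rule family[OF gr, of "card (R0 G) + 1" False])
    show "1 \<le> card (R0 G) + 1" by simp
    show "\<forall>m\<ge>1. \<exists>W. W \<subseteq> verts G \<and> embeds G (induced G W) \<and> disconnected (induced G W) \<and>
        Pk False m (induced G W) \<and> \<not> Pk False (m + (card (R0 G) + 1)) (induced G W)"
    proof (intro allI impI)
      fix m :: nat assume m1: "1 \<le> m"
      obtain M where M: "finite M" "card M = m" "M \<subseteq> isol G"
        using infinite_arbitrarily_large[OF fi] by blast
      have MV: "M \<subseteq> verts G" "M \<inter> NI G = {}" using M(3) unfolding isol_def by auto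
      define W where "W = NI G \<union> M"
      have WV: "W \<subseteq> verts G" unfolding W_def using NV MV by blast
      have grW: "graph (induced G W)" using graph_induced[OF gr] .
      have "emb ?e G (induced G W)" using emb_into_induced[OF em] imN unfolding W_def by blast
      then have embT: "embeds G (induced G W)" unfolding embeds_emb by blast
      have Misol: "x \<notin> NI (induced G W)" if "x \<in> M" for x
        using that MV unfolding NI_def by auto
      have P: "Pk False m (induced G W)"
      proof -
        have "M \<subseteq> verts (induced G W)" unfolding W_def by simp
        moreover have "\<forall>x\<in>M. \<forall>y\<in>M. x \<noteq> y \<longrightarrow> \<not> reach (induced G W) x y"
          using reach_isol Misol by metis
        ultimately show ?thesis unfolding Pk_def using M(1,2) by (intro exI[of _ M]) simp
      qed
      have nP: "\<not> Pk False (m + (card (R0 G) + 1)) (induced G W)"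
      proof
        assume "Pk False (m + (card (R0 G) + 1)) (induced G W)"
        then obtain X where X: "X \<subseteq> W" "finite X" "card X = m + (card (R0 G) + 1)"
           "\<forall>x\<in>X. \<forall>y\<in>X. x \<noteq> y \<longrightarrow> \<not> reach (induced G W) x y"
          unfolding Pk_def by auto
        have fR: "finite (R0 G \<union> M)" using fin M(1) unfolding R0_def by simp
        have "\<forall>x\<in>X. \<exists>r\<in>R0 G \<union> M. reach (induced G W) x r"
        proof
          fix x assume "x \<in> X"
          then have "x \<in> W" using X(1) by blast
          show "\<exists>r\<in>R0 G \<union> M. reach (induced G W) x r"
          proof (cases "x \<in> NI G")
            case True
            obtain r where r: "r \<in> R0 G" "reach G x r" using R0_reach[OF gr True] by blast
            have "reach (induced G W) x r"
            proof (rule reach_induced_closed[OF r(2)])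
              show "x \<in> W" by fact
              fix a b assume "a \<in> W" "adj G a b"
              then show "b \<in> W" unfolding W_def using adj_NI[OF gr \<open>adj G a b\<close>] by blast
            qed
            then show ?thesis using r(1) by blast
          next
            case False
            then have "x \<in> M" using \<open>x \<in> W\<close> unfolding W_def by blast
            then show ?thesis by (intro bexI[of _ x]) auto
          qed
        qed
        then have "card X \<le> card (R0 G \<union> M)" using pigeon[OF grW X(4) fR] by blast
        also have "\<dots> \<le> card (R0 G) + m" using card_Un_le[of "R0 G" M] M(2) by simp
        finally show False using X(3) by simp
      qed
      have disc: "disconnected (induced G W)"
      proof -
        obtain a where a: "a \<in> M" using M(2) m1 by (metis card.empty ex_in_conv not_one_le_zero)
        obtain y where y: "y \<in> NI G" using NIne by blast
        have "a \<noteq> y" using a y MV by blast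
        then have "\<not> reach (induced G W) a y" using reach_isol[OF Misol[OF a]] by metis
        moreover have "a \<in> W" "y \<in> W" unfolding W_def using a y by auto
        ultimately show ?thesis unfolding disconnected_def connected_graph_def by auto
      qed
      show "\<exists>W. W \<subseteq> verts G \<and> embeds G (induced G W) \<and> disconnected (induced G W) \<and>
        Pk False m (induced G W) \<and> \<not> Pk False (m + (card (R0 G) + 1)) (induced G W)"
        using WV embT disc P nP by (intro exI[of _ W]) blast
    qed
  qed
qed

text \<open>If some nontrivial component of G' misses the image, we get an absorbed edge.\<close>
lemma L1:
  assumes gr: "graph G" and gr': "graph G'" and fin: "finite (NTc G)"
    and f: "emb f G G'" and g: "emb g G' G" and d: "d \<in> NI G'"
    and nd: "\<forall>x\<in>NI G. \<not> reach G' (f x) d"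
  shows "FAM G"
proof -
  let ?h = "g \<circ> f"
  have h: "emb ?h G G" using emb_comp[OF f g] .
  have NV: "NI G \<subseteq> verts G" using NI_verts[OF gr] .
  have hinj: "inj_on ?h (NI G)" using h NV unfolding emb_def by (meson inj_on_subset)
  have him: "?h ` NI G \<subseteq> NI G" using emb_NI[OF gr h] by auto
  have had: "\<forall>x\<in>NI G. \<forall>y\<in>NI G. adj G x y \<longleftrightarrow> adj G (?h x) (?h y)"
    using h NV unfolding emb_def by blast
  let ?e = "\<lambda>x. if x \<in> NI G then ?h x else id x"
  have em: "emb ?e G G"
  proof (rule ext_emb[OF gr hinj him had])
    show "inj_on id (verts G - NI G)" by simp
    show "id ` (verts G - NI G) \<subseteq> verts G" by auto
    show "\<forall>x\<in>NI G. \<forall>y\<in>verts G - NI G. ?h x \<noteq> id y" using him by auto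
    show "\<forall>x\<in>verts G. \<forall>y\<in>verts G - NI G. \<not> adj G (?e x) (id y)"
      using not_adj_isol(2)[OF gr] by simp
  qed
  obtain d' where dd: "adj G' d d'" using d unfolding NI_def by blast
  have dV: "d \<in> verts G'" "d' \<in> verts G'" "adj G' d' d" using graphD[OF gr' dd] by auto
  have uv: "adj G (g d) (g d')" using g dV dd unfolding emb_def by blast
  have gNI: "g d \<in> NI G" "g d' \<in> NI G" using adj_NI[OF gr uv] by auto
  have fV: "f x \<in> verts G'" if "x \<in> verts G" for x using f that unfolding emb_def by blast
  have ginj: "g p = g q \<Longrightarrow> p \<in> verts G' \<Longrightarrow> q \<in> verts G' \<Longrightarrow> p = q" for p q
    using g unfolding emb_def inj_on_def by blast
  have gadj: "adj G (g p) (g q) \<Longrightarrow> p \<in> verts G' \<Longrightarrow> q \<in> verts G' \<Longrightarrow> adj G' p q" for p q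
    using g unfolding emb_def by blast
  have key: "\<not> reach G' (f x) c" if xN: "x \<in> NI G" and cc: "c = d \<or> c = d'" for x c
  proof
    assume r: "reach G' (f x) c"
    have "reach G' (f x) d"
      using cc
    proof
      assume "c = d" then show ?thesis using r by simp
    next
      assume "c = d'" then show ?thesis using reach_step[OF r[unfolded \<open>c = d'\<close>] dV(3)] by simp
    qed
    then show False using nd xN by blast
  qed
  have notin: "g c \<notin> ?e ` verts G" if cc: "c = d \<or> c = d'" for c
  proof
    assume "g c \<in> ?e ` verts G"
    then obtain x where x: "x \<in> verts G" "g c = ?e x" by blast
    have cV: "c \<in> verts G'" using cc dV by blast
    show False
    proof (cases "x \<in> NI G")
      case True
      then have "c = f x" using ginj[of c "f x"] x cV fV by simp
      then show False using key[OF True cc] by simp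
    next
      case False
      then show False using x gNI cc by auto
    qed
  qed
  have nadj: "\<not> adj G (g c) w" if cc: "c = d \<or> c = d'" and ww: "w \<in> ?e ` verts G" for c w
  proof
    assume a: "adj G (g c) w"
    obtain x where x: "x \<in> verts G" "w = ?e x" using ww by blast
    have cV: "c \<in> verts G'" using cc dV by blast
    show False
    proof (cases "x \<in> NI G")
      case True
      then have "adj G' c (f x)" using gadj[of c "f x"] a x cV fV by simp
      then have "reach G' (f x) c" using reach_adj graphD[OF gr'] by metis
      then show False using key[OF True cc] by simp
    next
      case False
      then show False using x a not_adj_isol(2)[OF gr False] by simp
    qed
  qed
  show ?thesis
    using C1_FAM[OF gr fin em uv notin[of d] notin[of d']] nadj by blast
qed



definition rep :: "'a set \<Rightarrow> 'a" where "rep C = (SOME x. x \<in> C)"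

definition mapC :: "('a \<Rightarrow> 'b) \<Rightarrow> 'b graph \<Rightarrow> 'a set \<Rightarrow> 'b set" where
  "mapC f H C = comp H (f (rep C))"

lemma mapC_eq:
  assumes gr: "graph G" and grH: "graph H" and f: "emb f G H" and x: "x \<in> verts G"
  shows "mapC f H (comp G x) = comp H (f x)"
proof -
  have "x \<in> comp G x" using comp_self[OF x] .
  then have "rep (comp G x) \<in> comp G x" unfolding rep_def by (rule someI)
  then have "reach G x (rep (comp G x))" by (simp add: component_verts_def)
  then have "reach H (f x) (f (rep (comp G x)))" using emb_reach[OF gr f] by blast
  then show ?thesis unfolding mapC_def using comp_eq[OF grH] by metis
qed

lemma NTc_mem:
  assumes gr: "graph G" and C: "C \<in> NTc G" and z: "z \<in> C"
  shows "C = comp G z \<and> z \<in> NI G"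
proof -
  obtain x where x: "x \<in> NI G" "C = comp G x" using C unfolding NTc_def by blast
  have "comp G z = comp G x" using comp_mem_eq[OF gr] z x(2) by blast
  moreover have "z \<in> NI G" using comp_NI[OF gr x(1)] z x(2) by blast
  ultimately show ?thesis using x(2) by simp
qed

lemma NTc_comp: "x \<in> NI G \<Longrightarrow> comp G x \<in> NTc G"
  unfolding NTc_def by blast

lemma comp_img:
  assumes gr: "graph G" and f: "emb f G H" and x: "x \<in> verts G"
  shows "f ` comp G x \<subseteq> comp H (f x)"
proof
  fix w assume "w \<in> f ` comp G x"
  then obtain y where y: "y \<in> comp G x" "w = f y" by blast
  have "reach G x y" "y \<in> verts G" using y(1) by (auto simp: component_verts_def)
  then have "reach H (f x) (f y)" "f y \<in> verts H" using emb_reach[OF gr f] f unfolding emb_def by auto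
  then show "w \<in> comp H (f x)" using y(2) by (simp add: component_verts_def)
qed

lemma emb_compC:
  assumes gr: "graph G" and f: "emb f G H" and x: "x \<in> verts G"
  shows "emb f (induced G (comp G x)) (induced H (comp H (f x)))"
  using emb_induced[OF f comp_sub comp_img[OF gr f x]] .

lemma conn_comp:
  assumes gr: "graph G" and x: "x \<in> verts G"
  shows "connected_graph (induced G (comp G x))"
proof -
  let ?H = "induced G (comp G x)"
  have grH: "graph ?H" using graph_induced[OF gr] .
  have r: "reach ?H x y" if "y \<in> comp G x" for y
  proof (rule reach_induced_closed)
    show "reach G x y" using that by (simp add: component_verts_def)
    show "x \<in> comp G x" using comp_self[OF x] .
    fix a b assume "a \<in> comp G x" "adj G a b"
    then show "b \<in> comp G x" using comp_closed[OF gr] by blast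
  qed
  have "reach ?H y z" if "y \<in> comp G x" "z \<in> comp G x" for y z
  proof -
    have "reach ?H y x" using reach_sym[OF grH r[OF that(1)]] .
    then show ?thesis using reach_trans r[OF that(2)] by metis
  qed
  moreover have "comp G x \<noteq> {}" using comp_self[OF x] by blast
  ultimately show ?thesis unfolding connected_graph_def by simp
qed

lemma pow_img: "\<tau> ` A \<subseteq> A \<Longrightarrow> (\<tau>^^n) ` A \<subseteq> A"
proof (induction n)
  case 0 then show ?case by simp
next
  case (Suc n)
  then have "(\<tau>^^Suc n) ` A = \<tau> ` ((\<tau>^^n) ` A)" by (simp add: image_comp)
  also have "\<dots> \<subseteq> \<tau> ` A" using Suc by (intro image_mono) simp
  finally show ?case using Suc.prems by blast
qed

lemma pow_inj_on: "inj_on \<tau> A \<Longrightarrow> \<tau> ` A \<subseteq> A \<Longrightarrow> inj_on (\<tau>^^n) A"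
proof (induction n)
  case 0 then show ?case by simp
next
  case (Suc n)
  have "inj_on (\<tau> \<circ> \<tau>^^n) A"
    using comp_inj_on[OF Suc.IH[OF Suc.prems] inj_on_subset[OF Suc.prems(1) pow_img[OF Suc.prems(2)]]] .
  then show ?case by (simp add: comp_def)
qed

lemma perm_return:
  assumes fin: "finite A" and inj: "inj_on \<tau> A" and im: "\<tau> ` A \<subseteq> A" and C: "C \<in> A"
  shows "\<exists>k. (\<tau>^^Suc k) C = C"
proof -
  let ?s = "\<lambda>i. (\<tau>^^i) C"
  have "range ?s \<subseteq> A" using pow_img[OF im] C by blast
  then have "finite (range ?s)" using fin finite_subset by blast
  then have "\<not> inj ?s" using finite_imageD[of ?s UNIV] by auto
  then obtain i j where ij: "?s i = ?s j" "i \<noteq> j" unfolding inj_def by blast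
  have "\<exists>i j. i < j \<and> ?s i = ?s j"
  proof (cases "i < j")
    case True then show ?thesis using ij by blast
  next
    case False then have "j < i" using ij by simp
    then show ?thesis using ij by metis
  qed
  then obtain i j where ij: "i < j" "?s i = ?s j" by blast
  have "(\<tau>^^j) C = (\<tau>^^i) ((\<tau>^^(j - i)) C)"
  proof -
    have "j = i + (j - i)" using ij by simp
    then have "\<tau>^^j = \<tau>^^i \<circ> \<tau>^^(j-i)" by (metis funpow_add)
    then show ?thesis by simp
  qed
  then have "(\<tau>^^i) C = (\<tau>^^i) ((\<tau>^^(j - i)) C)" using ij by simp
  moreover have "(\<tau>^^(j - i)) C \<in> A" using pow_img[OF im] C by blast
  ultimately have "C = (\<tau>^^(j - i)) C" using pow_inj_on[OF inj im, of i] C unfolding inj_on_def by blast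
  moreover obtain k where "j - i = Suc k" using ij by (metis Suc_diff_Suc)
  ultimately show ?thesis by metis
qed



lemma comp_match:
  fixes G G' :: "'a graph"
  assumes gr: "graph G" and gr': "graph G'" and fin: "finite (NTc G)"
    and hyp: "\<forall>H \<in> components G. \<forall>H' :: 'a graph.
           graph H' \<and> connected_graph H' \<and> equimorphic H' H \<longrightarrow> iso H' H"
    and nF: "\<not> FAM G" and f: "emb f G G'" and g: "emb g G' G"
  shows "bij_betw (mapC f G') (NTc G) (NTc G') \<and>
         (\<forall>C\<in>NTc G. iso (induced G' (mapC f G' C)) (induced G C))"
proof -
  let ?h = "g \<circ> f"
  have hemb: "emb ?h G G" using emb_comp[OF f g] .
  have NV: "NI G \<subseteq> verts G" using NI_verts[OF gr] .
  have Vf: "f x \<in> verts G'" if "x \<in> verts G" for x using f that unfolding emb_def by blast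
  define \<phi> where "\<phi> = mapC f G'"
  define \<tau> where "\<tau> = mapC ?h G"
  have \<phi>_eq: "\<phi> (comp G x) = comp G' (f x)" if "x \<in> verts G" for x
    unfolding \<phi>_def using mapC_eq[OF gr gr' f that] .
  have \<tau>_eq: "\<tau> (comp G x) = comp G (?h x)" if "x \<in> verts G" for x
    unfolding \<tau>_def using mapC_eq[OF gr gr hemb that] .
  have \<psi>_eq: "mapC g G (comp G' y) = comp G (g y)" if "y \<in> verts G'" for y
    using mapC_eq[OF gr' gr g that] .
  have \<phi>_into: "\<phi> ` NTc G \<subseteq> NTc G'"
  proof
    fix D assume "D \<in> \<phi> ` NTc G"
    then obtain x where x: "x \<in> NI G" "D = \<phi> (comp G x)" unfolding NTc_def by blast
    then have "D = comp G' (f x)" using \<phi>_eq NV by blast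
    moreover have "f x \<in> NI G'" using emb_NI[OF gr f x(1)] .
    ultimately show "D \<in> NTc G'" using NTc_comp[of "f x" G'] by simp
  qed
  have \<tau>_into: "\<tau> ` NTc G \<subseteq> NTc G"
  proof
    fix D assume "D \<in> \<tau> ` NTc G"
    then obtain x where x: "x \<in> NI G" "D = \<tau> (comp G x)" unfolding NTc_def by blast
    then have "D = comp G (?h x)" using \<tau>_eq NV by blast
    moreover have "?h x \<in> NI G" using emb_NI[OF gr hemb x(1)] .
    ultimately show "D \<in> NTc G" using NTc_comp[of "?h x" G] by simp
  qed
  have \<phi>_surj: "NTc G' \<subseteq> \<phi> ` NTc G"
  proof
    fix D assume "D \<in> NTc G'"
    then obtain d where d: "d \<in> NI G'" "D = comp G' d" unfolding NTc_def by blast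
    have "\<exists>x\<in>NI G. reach G' (f x) d"
    proof (rule ccontr)
      assume "\<not> (\<exists>x\<in>NI G. reach G' (f x) d)"
      then have "FAM G" using L1[OF gr gr' fin f g d(1)] by blast
      then show False using nF by simp
    qed
    then obtain x where x: "x \<in> NI G" "reach G' (f x) d" by blast
    have "D = comp G' (f x)" using comp_eq[OF gr' x(2)] d(2) by simp
    also have "\<dots> = \<phi> (comp G x)" using \<phi>_eq x(1) NV by auto
    finally show "D \<in> \<phi> ` NTc G" using NTc_comp[OF x(1)] by blast
  qed
  have \<tau>_surj: "NTc G \<subseteq> \<tau> ` NTc G"
  proof
    fix D assume "D \<in> NTc G"
    then obtain d where d: "d \<in> NI G" "D = comp G d" unfolding NTc_def by blast
    have "\<exists>x\<in>NI G. reach G (?h x) d"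
    proof (rule ccontr)
      assume "\<not> (\<exists>x\<in>NI G. reach G (?h x) d)"
      then have "FAM G" using L1[OF gr gr fin hemb emb_id d(1)] by blast
      then show False using nF by simp
    qed
    then obtain x where x: "x \<in> NI G" "reach G (?h x) d" by blast
    have "D = comp G (?h x)" using comp_eq[OF gr x(2)] d(2) by simp
    also have "\<dots> = \<tau> (comp G x)" using \<tau>_eq x(1) NV by auto
    finally show "D \<in> \<tau> ` NTc G" using NTc_comp[OF x(1)] by blast
  qed
  have \<tau>_inj: "inj_on \<tau> (NTc G)" using finite_surj_inj[OF fin \<tau>_surj] .
  have \<tau>_\<phi>: "\<tau> C = mapC g G (\<phi> C)" if CN: "C \<in> NTc G" for C
  proof -
    obtain x where x: "x \<in> NI G" "C = comp G x" using CN unfolding NTc_def by blast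
    have xV: "x \<in> verts G" using x(1) NV by blast
    have "mapC g G (\<phi> C) = comp G (g (f x))" using \<phi>_eq[OF xV] \<psi>_eq[OF Vf[OF xV]] x(2) by simp
    also have "\<dots> = \<tau> C" using \<tau>_eq[OF xV] x(2) by simp
    finally show ?thesis by simp
  qed
  have \<phi>_inj: "inj_on \<phi> (NTc G)"
  proof (rule inj_onI)
    fix C1 C2 assume "C1 \<in> NTc G" "C2 \<in> NTc G" "\<phi> C1 = \<phi> C2"
    then have "\<tau> C1 = \<tau> C2" using \<tau>_\<phi> by metis
    then show "C1 = C2" using \<tau>_inj \<open>C1 \<in> NTc G\<close> \<open>C2 \<in> NTc G\<close> unfolding inj_on_def by blast
  qed
  have bij: "bij_betw \<phi> (NTc G) (NTc G')"
    unfolding bij_betw_def using \<phi>_inj \<phi>_into \<phi>_surj by blast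
  have E3: "embeds (induced G D) (induced G (\<tau> D))" if DN: "D \<in> NTc G" for D
  proof -
    obtain y where y: "y \<in> NI G" "D = comp G y" using DN unfolding NTc_def by blast
    have yV: "y \<in> verts G" using y(1) NV by blast
    show ?thesis unfolding embeds_emb using emb_compC[OF gr hemb yV] \<tau>_eq[OF yV] y(2) by auto
  qed
  have chain: "embeds (induced G (\<tau> C)) (induced G ((\<tau>^^Suc j) C))" if CN: "C \<in> NTc G" for C j
  proof (induction j)
    case 0 then show ?case unfolding embeds_emb using emb_id[of "induced G (\<tau> C)"] by auto
  next
    case (Suc j)
    have "(\<tau>^^Suc j) C \<in> NTc G" using pow_img[OF \<tau>_into] CN by blast
    then have "embeds (induced G ((\<tau>^^Suc j) C)) (induced G ((\<tau>^^Suc (Suc j)) C))"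
      using E3 by simp
    then show ?case using embeds_trans[OF Suc.IH] by blast
  qed
  have isoC: "iso (induced G' (\<phi> C)) (induced G C)" if C: "C \<in> NTc G" for C
  proof -
    obtain x where x: "x \<in> NI G" "C = comp G x" using C unfolding NTc_def by blast
    have xV: "x \<in> verts G" using x(1) NV by blast
    have E1: "emb f (induced G C) (induced G' (\<phi> C))"
      using emb_compC[OF gr f xV] \<phi>_eq[OF xV] x(2) by simp
    have E2: "emb g (induced G' (\<phi> C)) (induced G (\<tau> C))"
      using emb_compC[OF gr' g Vf[OF xV]] \<phi>_eq[OF xV] \<tau>_eq[OF xV] x(2) by simp
    obtain k where k: "(\<tau>^^Suc k) C = C" using perm_return[OF fin \<tau>_inj \<tau>_into C] by blast
    have "embeds (induced G (\<tau> C)) (induced G C)" using chain[OF C, of k] k by simp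
    then have "embeds (induced G' (\<phi> C)) (induced G C)"
      using embeds_trans E2 unfolding embeds_emb by blast
    moreover have "embeds (induced G C) (induced G' (\<phi> C))" using E1 unfolding embeds_emb by blast
    ultimately have eq: "equimorphic (induced G' (\<phi> C)) (induced G C)"
      unfolding equimorphic_def by blast
    have g1: "graph (induced G' (\<phi> C))" using graph_induced[OF gr'] .
    have c1: "connected_graph (induced G' (\<phi> C))"
      using conn_comp[OF gr' Vf[OF xV]] \<phi>_eq[OF xV] x(2) by simp
    have "induced G C \<in> components G" unfolding components_def using x(2) xV by blast
    then show ?thesis using hyp g1 c1 eq by blast
  qed
  show ?thesis using bij isoC unfolding \<phi>_def by blast
qed



unbundle cardinal_syntax

lemma absorb_gen:
  assumes gr: "graph G" and h: "emb h G G" and AN: "A \<subseteq> NI G"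
    and dis: "A \<inter> h ` NI G = {}" and nad: "\<forall>a\<in>A. \<forall>w\<in>h ` NI G \<union> A. \<not> adj G a w"
  shows "absorb G A"
proof -
  have NV: "NI G \<subseteq> verts G" using NI_verts[OF gr] .
  have "inj_on h (NI G)" using h NV unfolding emb_def by (meson inj_on_subset)
  moreover have "h ` NI G \<subseteq> NI G" using emb_NI[OF gr h] by auto
  moreover have "\<forall>x\<in>NI G. \<forall>y\<in>NI G. adj G x y \<longleftrightarrow> adj G (h x) (h y)"
    using h NV unfolding emb_def by blast
  ultimately have "absw G h A" unfolding absw_def using dis nad by blast
  then show ?thesis unfolding absorb_def using AN by blast
qed

lemma isol_bij:
  fixes G G' :: "'a graph"
  assumes gr: "graph G" and gr': "graph G'" and fin: "finite (NTc G)"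
    and nF: "\<not> FAM G" and f: "emb f G G'" and g: "emb g G' G"
  shows "\<exists>\<beta>. bij_betw \<beta> (isol G') (isol G)"
proof -
  let ?h = "g \<circ> f"
  have hemb: "emb ?h G G" using emb_comp[OF f g] .
  have NV: "NI G \<subseteq> verts G" using NI_verts[OF gr] .
  have NV': "NI G' \<subseteq> verts G'" using NI_verts[OF gr'] .
  have fV: "f x \<in> verts G'" if "x \<in> verts G" for x using f that unfolding emb_def by blast
  have gV: "g x \<in> verts G" if "x \<in> verts G'" for x using g that unfolding emb_def by blast
  have finj: "inj_on f (verts G)" using f unfolding emb_def by blast
  have ginj: "inj_on g (verts G')" using g unfolding emb_def by blast
  have hinj: "inj_on ?h (verts G)" using hemb unfolding emb_def by blast
  have hadj: "adj G (?h x) (?h y) \<longleftrightarrow> adj G x y" if "x \<in> verts G" "y \<in> verts G" for x y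
    using hemb that unfolding emb_def by blast
  have gadj: "adj G (g x) (g y) \<longleftrightarrow> adj G' x y" if "x \<in> verts G'" "y \<in> verts G'" for x y
    using g that unfolding emb_def by blast
  define I where "I = isol G"
  define I' where "I' = isol G'"
  have IV: "I \<subseteq> verts G" "I \<inter> NI G = {}" unfolding I_def isol_def by auto
  have IV': "I' \<subseteq> verts G'" "I' \<inter> NI G' = {}" unfolding I'_def isol_def by auto
  define B where "B = {x \<in> I. f x \<in> NI G'}"
  define S2 where "S2 = {x \<in> I'. g x \<in> NI G}"
  have ab1: "absorb G (?h ` B)"
  proof (rule absorb_gen[OF gr hemb])
    show "?h ` B \<subseteq> NI G" unfolding B_def using emb_NI[OF gr' g] by auto
    show "?h ` B \<inter> ?h ` NI G = {}"
    proof (rule ccontr)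
      assume "?h ` B \<inter> ?h ` NI G \<noteq> {}"
      then obtain x y where xy: "x \<in> B" "y \<in> NI G" "?h x = ?h y" by blast
      have "x \<in> verts G" "y \<in> verts G" using xy IV NV unfolding B_def by auto
      then have "x = y" using hinj xy(3) unfolding inj_on_def by blast
      then show False using xy IV unfolding B_def by blast
    qed
    show "\<forall>a\<in>?h ` B. \<forall>w\<in>?h ` NI G \<union> ?h ` B. \<not> adj G a w"
    proof (intro ballI)
      fix a w assume a: "a \<in> ?h ` B" and w: "w \<in> ?h ` NI G \<union> ?h ` B"
      obtain x where x: "x \<in> B" "a = ?h x" using a by blast
      obtain y where y: "y \<in> verts G" "w = ?h y" using w NV IV unfolding B_def by blast
      have xV: "x \<in> verts G" "x \<notin> NI G" using x(1) IV unfolding B_def by auto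
      show "\<not> adj G a w" using hadj[OF xV(1) y(1)] not_adj_isol(1)[OF gr xV(2)] x(2) y(2) by simp
    qed
  qed
  have ab2: "absorb G (g ` S2)"
  proof (rule absorb_gen[OF gr hemb])
    show "g ` S2 \<subseteq> NI G" unfolding S2_def by auto
    show "g ` S2 \<inter> ?h ` NI G = {}"
    proof (rule ccontr)
      assume "g ` S2 \<inter> ?h ` NI G \<noteq> {}"
      then obtain x y where xy: "x \<in> S2" "y \<in> NI G" "g x = g (f y)" by auto
      have "x \<in> verts G'" "f y \<in> verts G'" using xy IV' NV fV unfolding S2_def by auto
      then have "x = f y" using ginj xy(3) unfolding inj_on_def by blast
      moreover have "f y \<in> NI G'" using emb_NI[OF gr f xy(2)] .
      ultimately show False using xy(1) IV' unfolding S2_def by blast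
    qed
    show "\<forall>a\<in>g ` S2. \<forall>w\<in>?h ` NI G \<union> g ` S2. \<not> adj G a w"
    proof (intro ballI)
      fix a w assume a: "a \<in> g ` S2" and w: "w \<in> ?h ` NI G \<union> g ` S2"
      obtain x where x: "x \<in> S2" "a = g x" using a by blast
      obtain z where z: "z \<in> verts G'" "w = g z" using w NV fV IV' unfolding S2_def by auto
      have xV: "x \<in> verts G'" "x \<notin> NI G'" using x(1) IV' unfolding S2_def by auto
      show "\<not> adj G a w" using gadj[OF xV(1) z(1)] not_adj_isol(1)[OF gr' xV(2)] x(2) z(2) by simp
    qed
  qed
  have f1: "inj_on f (I - B)" "f ` (I - B) \<subseteq> I'"
  proof -
    show "inj_on f (I - B)" using finj IV(1) by (meson Diff_subset inj_on_subset subset_trans)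
    show "f ` (I - B) \<subseteq> I'" using IV(1) fV unfolding B_def I'_def isol_def by auto
  qed
  have g1: "inj_on g I'" "g ` I' \<subseteq> g ` S2 \<union> I"
  proof -
    show "inj_on g I'" using ginj IV'(1) by (meson inj_on_subset)
    show "g ` I' \<subseteq> g ` S2 \<union> I"
    proof
      fix w assume "w \<in> g ` I'"
      then obtain x where x: "x \<in> I'" "w = g x" by blast
      show "w \<in> g ` S2 \<union> I"
      proof (cases "g x \<in> NI G")
        case True then have "x \<in> S2" unfolding S2_def using x(1) by simp
        then show ?thesis using x(2) by blast
      next
        case False
        have "g x \<in> verts G" using gV IV'(1) x(1) by blast
        then have "g x \<in> I" unfolding I_def isol_def using False by simp
        then show ?thesis using x(2) by simp
      qed
    qed
  qed
  have BV: "B \<subseteq> verts G" using IV(1) unfolding B_def by blast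
  have hB: "inj_on ?h B" using inj_on_subset[OF hinj BV] .
  have le1: "|I| \<le>o |I'|" and le2: "|I'| \<le>o |I|"
  proof -
    have "|I| \<le>o |I'| \<and> |I'| \<le>o |I|"
    proof (cases "finite I")
      case True
      have "?h ` B = {}"
      proof (rule ccontr)
        assume "?h ` B \<noteq> {}"
        then obtain a where "a \<in> ?h ` B" by blast
        then have "FAM G" using absorb_C2[OF gr fin _ ab1] True unfolding I_def by blast
        then show False using nF by simp
      qed
      then have "B = {}" by simp
      then have "|I| \<le>o |I'|" using f1 card_of_ordLeq by force
      moreover have "g ` S2 = {}"
      proof (rule ccontr)
        assume "g ` S2 \<noteq> {}"
        then obtain a where "a \<in> g ` S2" by blast
        then have "FAM G" using absorb_C2[OF gr fin _ ab2] True unfolding I_def by blast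
        then show False using nF by simp
      qed
      then have "|I'| \<le>o |I|" using g1 card_of_ordLeq by force
      ultimately show ?thesis by blast
    next
      case False
      have small: "|A| <o |I|" if ab: "absorb G A" for A
      proof -
        have "\<not> |I| \<le>o |A|"
        proof
          assume "|I| \<le>o |A|"
          then obtain \<iota> where "inj_on \<iota> I" "\<iota> ` I \<subseteq> A" using card_of_ordLeq[of I A] by blast
          then have "FAM G" using absorb_C3[OF gr fin _ ab] False unfolding I_def by blast
          then show False using nF by simp
        qed
        then show ?thesis using not_ordLeq_iff_ordLess[OF card_of_Well_order card_of_Well_order] by blast
      qed
      have "|B| \<le>o |?h ` B|" using hB card_of_ordLeq[of B "?h ` B"] by blast
      then have Bs: "|B| <o |I|" using small[OF ab1] ordLeq_ordLess_trans by blast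
      have "\<not> |I - B| <o |I|"
      proof
        assume "|I - B| <o |I|"
        then have "|B \<union> (I - B)| <o |I|" using card_of_Un_ordLess_infinite[OF False Bs] by blast
        moreover have "B \<union> (I - B) = I" unfolding B_def by blast
        ultimately show False using ordLess_irreflexive by metis
      qed
      then have "|I| \<le>o |I - B|" using not_ordLess_iff_ordLeq[OF card_of_Well_order card_of_Well_order] by blast
      moreover have "|I - B| \<le>o |I'|" using f1 card_of_ordLeq by blast
      ultimately have c1: "|I| \<le>o |I'|" using ordLeq_transitive by blast
      have "|I'| \<le>o |g ` S2 \<union> I|" using g1 card_of_ordLeq by blast
      moreover have "|g ` S2 \<union> I| \<le>o |I|"
      proof (rule card_of_Un_ordLeq_infinite_Field)
        show "\<not> finite (Field (card_of I))" using False by (simp add: Field_card_of)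
        show "|g ` S2| \<le>o |I|" using small[OF ab2] ordLess_imp_ordLeq by blast
        show "|I| \<le>o |I|" using card_of_refl ordIso_iff_ordLeq by blast
        show "Card_order |I|" by (rule card_of_Card_order)
      qed
      ultimately have "|I'| \<le>o |I|" using ordLeq_transitive by blast
      then show ?thesis using c1 by blast
    qed
    then show "|I| \<le>o |I'|" "|I'| \<le>o |I|" by blast+
  qed
  have "|I'| =o |I|" using le1 le2 ordIso_iff_ordLeq by blast
  then show ?thesis using card_of_ordIso[of I' I] unfolding I_def I'_def by blast
qed



lemma NTc_sub: assumes "graph G" "C \<in> NTc G" shows "C \<subseteq> NI G"
proof
  fix z assume "z \<in> C"
  then show "z \<in> NI G" using NTc_mem[OF assms \<open>z \<in> C\<close>] by simp
qed

lemma NTc_disj: assumes "graph G" "C1 \<in> NTc G" "C2 \<in> NTc G" "z \<in> C1" "z \<in> C2" shows "C1 = C2"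
proof -
  have "C1 = comp G z" using NTc_mem[OF assms(1,2,4)] by simp
  moreover have "C2 = comp G z" using NTc_mem[OF assms(1,3,5)] by simp
  ultimately show ?thesis by simp
qed

lemma assemble:
  fixes G G' :: "'a graph"
  assumes gr: "graph G" and gr': "graph G'"
    and \<Phi>: "bij_betw \<Phi> (NTc G') (NTc G)"
    and isoD: "\<forall>D\<in>NTc G'. iso (induced G' D) (induced G (\<Phi> D))"
    and \<beta>: "bij_betw \<beta> (isol G') (isol G)"
  shows "iso G' G"
proof -
  define \<sigma> where "\<sigma> D = (SOME s. emb s (induced G' D) (induced G (\<Phi> D)) \<and> s ` D = \<Phi> D)" for D
  have \<sigma>: "emb (\<sigma> D) (induced G' D) (induced G (\<Phi> D)) \<and> \<sigma> D ` D = \<Phi> D" if D: "D \<in> NTc G'" for D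
  proof -
    have "\<exists>s. emb s (induced G' D) (induced G (\<Phi> D)) \<and> s ` verts (induced G' D) = verts (induced G (\<Phi> D))"
      using iso_emb[THEN iffD1, OF isoD[rule_format, OF D]] .
    then have "\<exists>s. emb s (induced G' D) (induced G (\<Phi> D)) \<and> s ` D = \<Phi> D" by simp
    then show ?thesis unfolding \<sigma>_def by (rule someI_ex)
  qed
  have \<sigma>inj: "inj_on (\<sigma> D) D" if "D \<in> NTc G'" for D using \<sigma>[OF that] unfolding emb_def by simp
  have \<sigma>adj: "adj G' x y \<longleftrightarrow> adj G (\<sigma> D x) (\<sigma> D y)" if "D \<in> NTc G'" "x \<in> D" "y \<in> D" for D x y
  proof -
    have "\<sigma> D x \<in> \<Phi> D" "\<sigma> D y \<in> \<Phi> D" using \<sigma>[OF that(1)] that(2,3) by blast+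
    moreover have "adj (induced G' D) x y \<longleftrightarrow> adj (induced G (\<Phi> D)) (\<sigma> D x) (\<sigma> D y)"
      using \<sigma>[OF that(1)] that(2,3) unfolding emb_def by simp
    ultimately show ?thesis using that(2,3) by simp
  qed
  have \<Phi>in: "\<Phi> D \<in> NTc G" if "D \<in> NTc G'" for D using \<Phi> that unfolding bij_betw_def by blast
  have \<Phi>inj: "inj_on \<Phi> (NTc G')" using \<Phi> unfolding bij_betw_def by blast
  define F where "F x = (if x \<in> NI G' then \<sigma> (comp G' x) x else \<beta> x)" for x
  have NV: "NI G \<subseteq> verts G" using NI_verts[OF gr] .
  have NV': "NI G' \<subseteq> verts G'" using NI_verts[OF gr'] .
  have cD: "comp G' x \<in> NTc G'" "x \<in> comp G' x" if "x \<in> NI G'" for x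
    using NTc_comp[OF that] comp_self[of x G'] that NV' by auto
  have FNI: "F x \<in> \<Phi> (comp G' x)" "\<Phi> (comp G' x) \<in> NTc G" "F x \<in> NI G" if "x \<in> NI G'" for x
  proof -
    show "F x \<in> \<Phi> (comp G' x)" using \<sigma>[OF cD(1)[OF that]] cD(2)[OF that] that unfolding F_def by auto
    show "\<Phi> (comp G' x) \<in> NTc G" using \<Phi>in cD(1)[OF that] .
    then show "F x \<in> NI G" using NTc_sub[OF gr] \<open>F x \<in> \<Phi> (comp G' x)\<close> by blast
  qed
  have Fis: "F x \<in> isol G" if "x \<in> verts G'" "x \<notin> NI G'" for x
  proof -
    have "x \<in> isol G'" using that unfolding isol_def by simp
    then show ?thesis using \<beta> that(2) unfolding F_def bij_betw_def by auto
  qed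
  have disj: "NI G \<inter> isol G = {}" unfolding isol_def by blast
  have \<beta>inj: "inj_on \<beta> (isol G')" using \<beta> unfolding bij_betw_def by blast
  have sameD: "comp G' x = comp G' y" if "x \<in> NI G'" "y \<in> NI G'" "F x = F y \<or> adj G (F x) (F y)" for x y
  proof -
    have e: "\<Phi> (comp G' x) = comp G (F x)" using NTc_mem[OF gr FNI(2)[OF that(1)] FNI(1)[OF that(1)]] by blast
    have "F y \<in> comp G (F x)"
    proof (cases "F x = F y")
      case True then show ?thesis using comp_self[of "F x" G] FNI(3)[OF that(1)] NV by auto
    next
      case False
      then have "adj G (F x) (F y)" using that(3) by simp
      then show ?thesis using comp_closed[OF gr, of "F x" "F x" "F y"] comp_self[of "F x" G] FNI(3)[OF that(1)] NV by auto
    qed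
    then have "\<Phi> (comp G' x) = \<Phi> (comp G' y)"
      using NTc_disj[OF gr FNI(2)[OF that(1)] FNI(2)[OF that(2)] _ FNI(1)[OF that(2)]] e by blast
    then show ?thesis using \<Phi>inj cD(1)[OF that(1)] cD(1)[OF that(2)] unfolding inj_on_def by blast
  qed
  have "inj_on F (verts G')"
  proof (rule inj_onI)
    fix x y assume xy: "x \<in> verts G'" "y \<in> verts G'" "F x = F y"
    show "x = y"
    proof (cases "x \<in> NI G'")
      case True
      show ?thesis
      proof (cases "y \<in> NI G'")
        case True
        have D: "comp G' x = comp G' y" using sameD[OF \<open>x \<in> NI G'\<close> True] xy(3) by blast
        have "y \<in> comp G' x" using D cD(2)[OF True] by simp
        moreover have "\<sigma> (comp G' x) x = \<sigma> (comp G' x) y"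
          using xy(3) D \<open>x \<in> NI G'\<close> True unfolding F_def by simp
        ultimately show ?thesis using \<sigma>inj[OF cD(1)[OF \<open>x \<in> NI G'\<close>]] cD(2)[OF \<open>x \<in> NI G'\<close>]
          unfolding inj_on_def by blast
      next
        case False
        then show ?thesis using FNI(3)[OF \<open>x \<in> NI G'\<close>] Fis[OF xy(2) False] xy(3) disj by auto
      qed
    next
      case False
      show ?thesis
      proof (cases "y \<in> NI G'")
        case True
        then show ?thesis using FNI(3)[OF True] Fis[OF xy(1) False] xy(3) disj by auto
      next
        case False
        then have "\<beta> x = \<beta> y" using xy(3) \<open>x \<notin> NI G'\<close> unfolding F_def by simp
        moreover have "x \<in> isol G'" "y \<in> isol G'" using xy(1,2) False \<open>x \<notin> NI G'\<close> unfolding isol_def by auto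
        ultimately show ?thesis using \<beta>inj unfolding inj_on_def by blast
      qed
    qed
  qed
  moreover have FV: "F ` verts G' = verts G"
  proof
    show "F ` verts G' \<subseteq> verts G"
    proof
      fix w assume "w \<in> F ` verts G'"
      then obtain x where x: "x \<in> verts G'" "w = F x" by blast
      show "w \<in> verts G"
      proof (cases "x \<in> NI G'")
        case True then show ?thesis using FNI(3)[OF True] NV x(2) by blast
      next
        case False then show ?thesis using Fis[OF x(1) False] x(2) unfolding isol_def by blast
      qed
    qed
  next
    show "verts G \<subseteq> F ` verts G'"
    proof
      fix z assume z: "z \<in> verts G"
      show "z \<in> F ` verts G'"
      proof (cases "z \<in> NI G")
        case True
        have "comp G z \<in> NTc G" using NTc_comp[OF True] .
        then have "comp G z \<in> \<Phi> ` NTc G'" using \<Phi> unfolding bij_betw_def by simp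
        then obtain D where D: "D \<in> NTc G'" "\<Phi> D = comp G z" by (metis imageE)
        have "z \<in> \<sigma> D ` D" using \<sigma>[OF D(1)] D(2) comp_self[OF z] by simp
        then obtain x where x: "x \<in> D" "z = \<sigma> D x" by blast
        have xD: "D = comp G' x" "x \<in> NI G'" using NTc_mem[OF gr' D(1) x(1)] by auto
        then have "F x = z" using x(2) unfolding F_def by simp
        moreover have "x \<in> verts G'" using xD(2) NV' by blast
        ultimately show ?thesis by blast
      next
        case False
        then have "z \<in> isol G" using z unfolding isol_def by simp
        then obtain x where x: "x \<in> isol G'" "z = \<beta> x" using \<beta> unfolding bij_betw_def by auto
        then have "x \<in> verts G'" "x \<notin> NI G'" unfolding isol_def by auto
        then have "F x = z" using x(2) unfolding F_def by simp
        then show ?thesis using \<open>x \<in> verts G'\<close> by blast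
      qed
    qed
  qed
  moreover have "\<forall>x\<in>verts G'. \<forall>y\<in>verts G'. adj G' x y \<longleftrightarrow> adj G (F x) (F y)"
  proof (intro ballI iffI)
    fix x y assume xy: "x \<in> verts G'" "y \<in> verts G'" and a: "adj G' x y"
    have NIxy: "x \<in> NI G'" "y \<in> NI G'" using adj_NI[OF gr' a] by auto
    have "y \<in> comp G' x" using comp_closed[OF gr' cD(2)[OF NIxy(1)] a] .
    then have D: "comp G' y = comp G' x" using comp_mem_eq[OF gr'] by blast
    have "adj G (\<sigma> (comp G' x) x) (\<sigma> (comp G' x) y)"
      using \<sigma>adj[OF cD(1)[OF NIxy(1)] cD(2)[OF NIxy(1)] \<open>y \<in> comp G' x\<close>] a by simp
    then show "adj G (F x) (F y)" using NIxy D unfolding F_def by simp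
  next
    fix x y assume xy: "x \<in> verts G'" "y \<in> verts G'" and a: "adj G (F x) (F y)"
    have NIF: "F x \<in> NI G" "F y \<in> NI G" using adj_NI[OF gr a] by auto
    have NIxy: "x \<in> NI G'" "y \<in> NI G'"
    proof -
      show "x \<in> NI G'"
      proof (rule ccontr)
        assume "x \<notin> NI G'" then show False using Fis[OF xy(1)] NIF disj by blast
      qed
      show "y \<in> NI G'"
      proof (rule ccontr)
        assume "y \<notin> NI G'" then show False using Fis[OF xy(2)] NIF disj by blast
      qed
    qed
    have D: "comp G' x = comp G' y" using sameD[OF NIxy] a by blast
    have yD: "y \<in> comp G' x" using D cD(2)[OF NIxy(2)] by simp
    have "adj G (\<sigma> (comp G' x) x) (\<sigma> (comp G' x) y)" using a NIxy D unfolding F_def by simp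
    then show "adj G' x y"
      using \<sigma>adj[OF cD(1)[OF NIxy(1)] cD(2)[OF NIxy(1)] yD] by simp
  qed
  ultimately show ?thesis unfolding iso_def bij_betw_def by blast
qed

theorem lemma2p1:
  fixes G :: "'a graph"
  assumes "graph G"
    and "disconnected G"
    and "finite {H \<in> components G. \<not> trivial_component H}"
    and "\<forall>H \<in> components G. \<forall>H' :: 'a graph.
           graph H' \<and> connected_graph H' \<and> equimorphic H' H \<longrightarrow> iso H' H"
  shows "(\<exists>S :: 'a graph set. infinite S \<and>
            (\<forall>G' \<in> S. sibling G' G \<and> disconnected G') \<and>
            (\<forall>G1 \<in> S. \<forall>G2 \<in> S. G1 \<noteq> G2 \<longrightarrow> \<not> iso G1 G2))
         \<or> (\<forall>G' :: 'a graph. sibling G' G \<longrightarrow> iso G' G)"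
proof -
  have gr: "graph G" by fact
  have fin: "finite (NTc G)" using NTc_finite[OF assms(1,3)] .
  show ?thesis
  proof (cases "FAM G")
    case True
    then show ?thesis unfolding FAM_def by blast
  next
    case False
    have "\<forall>G' :: 'a graph. sibling G' G \<longrightarrow> iso G' G"
    proof (intro allI impI)
      fix G' :: "'a graph" assume sib: "sibling G' G"
      have gr': "graph G'" using sib unfolding sibling_def by blast
      obtain g where g: "emb g G' G" using sib unfolding sibling_def equimorphic_def embeds_emb by blast
      obtain f where f: "emb f G G'" using sib unfolding sibling_def equimorphic_def embeds_emb by blast
      have cm: "bij_betw (mapC f G') (NTc G) (NTc G') \<and>
         (\<forall>C\<in>NTc G. iso (induced G' (mapC f G' C)) (induced G C))"
        using comp_match[OF gr gr' fin assms(4) False f g] .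
      define \<phi> where "\<phi> = mapC f G'"
      have bij: "bij_betw \<phi> (NTc G) (NTc G')" using cm unfolding \<phi>_def by blast
      have isC: "iso (induced G' (\<phi> C)) (induced G C)" if "C \<in> NTc G" for C
        using cm that unfolding \<phi>_def by blast
      define \<Phi> where "\<Phi> = inv_into (NTc G) \<phi>"
      have \<Phi>: "bij_betw \<Phi> (NTc G') (NTc G)" unfolding \<Phi>_def using bij_betw_inv_into[OF bij] .
      have "iso (induced G' D) (induced G (\<Phi> D))" if D: "D \<in> NTc G'" for D
      proof -
        have "D \<in> \<phi> ` NTc G" using bij D unfolding bij_betw_def by blast
        then have "\<phi> (\<Phi> D) = D" unfolding \<Phi>_def by (rule f_inv_into_f)
        moreover have "\<Phi> D \<in> NTc G" using \<Phi> D unfolding bij_betw_def by blast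
        ultimately show ?thesis using isC[of "\<Phi> D"] by simp
      qed
      moreover obtain \<beta> where "bij_betw \<beta> (isol G') (isol G)" using isol_bij[OF gr gr' fin False f g] by blast
      ultimately show "iso G' G" using assemble[OF gr gr' \<Phi>] by blast
    qed
    then show ?thesis by blast
  qed
qed

end
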